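(* Let $\lambda$ be a partition with $\lambda_1$ columns of lengths $\lambda^t_1,\dots,\lambda^t_{\lambda_1}$, and let $\vartheta$ be any statistic of non-orientability (defined on $\lambda$-injectively decorated maps and on $1^m$-injectively decorated maps). Then $$F^{(0)}_{\lambda,\vartheta}=\prod_{1\le i\le\lambda_1}F^{(0)}_{1^{\lambda^t_i},\vartheta}.$$
   Context: Maps: unordered collections of connected graphs embedded in compact surfaces (orientable or not) with disc faces, up to homeomorphism; bipartite = white/black vertices with every edge joining different colors; $\mathrm{type}(M)$ = partition of the number of edges given by half-degrees of faces; $|\mathcal V_\circ(M)|$ = number of white vertices, $\mathrm{cc}(M)$ = number of components. Rooted: each component has a distinguished oriented white corner, the root edge following it. $\lambda$ is identified with its Young diagram (boxes $(i,j)$, row $i$, column $j$), boxes ordered lexicographically. A $\lambda$-injectively decorated map is a bipartite map with an injective function from edges to boxes such that edges sharing a black vertex go to one row and edges sharing a white vertex go to one column; rooted if each root edge carries the smallest box used in its component. $\mathrm{ID}_n(\lambda)$ = rooted such maps of size $n$. A statistic of non-orientability is nonnegative-integer valued and vanishes exactly on orientable maps. With $b=\alpha-1$, $F^{(\alpha)}_{\lambda,\vartheta}(\mathbf p)=\sum_{M\in\mathrm{ID}_{|\lambda|}(\lambda)}(-1)^{|\lambda|-|\mathcal V_\circ(M)|}\alpha^{|\mathcal V_\circ(M)|-\mathrm{cc}(M)}b^{\vartheta(M)}p_{\mathrm{type}(M)}$, whose coefficients are polynomials in $\alpha$; $F^{(0)}_{\lambda,\vartheta}$ denotes its specialization at $\alpha=0$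 (so $b=-1$). *)

theory Defs
  imports Main
begin

text \<open>Combinatorial maps (orientable or not) encoded as flag systems:
  a finite set of flags with three fixed-point-free involutions a0, a1, a2
  such that a0 a2 = a2 a0 is fixed-point-free.  Vertices are orbits of
  <a1,a2>, edges orbits of <a0,a2> (4 flags each), faces orbits of <a0,a1>
  (a face of degree d has 2d flags), components orbits of <a0,a1,a2>.
  A bipartite map carries a white/black colouring of flags constant on
  vertices and swapped along edges; a root is a flag at a white vertex
  (an oriented white corner, whose edge is the root edge); a decoration
  assigns a box to each flag, constant on edges.\<close>

record dmap =
  flags :: "nat set"
  a0 :: "nat \<Rightarrow> nat"
  a1 :: "nat \<Rightarrow> nat"
  a2 :: "nat \<Rightarrow> nat"
  white :: "nat \<Rightarrow> bool"
  root :: "nat set"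
  dec :: "nat \<Rightarrow> nat \<times> nat"

definition orb :: "nat set \<Rightarrow> (nat \<Rightarrow> nat) set \<Rightarrow> nat \<Rightarrow> nat set" where
  "orb D fs x = {y. (x, y) \<in> {(u, f u) | u f. u \<in> D \<and> f \<in> fs}\<^sup>*}"

definition vertex :: "dmap \<Rightarrow> nat \<Rightarrow> nat set" where
  "vertex M x = orb (flags M) {a1 M, a2 M} x"
definition edge :: "dmap \<Rightarrow> nat \<Rightarrow> nat set" where
  "edge M x = orb (flags M) {a0 M, a2 M} x"
definition face :: "dmap \<Rightarrow> nat \<Rightarrow> nat set" where
  "face M x = orb (flags M) {a0 M, a1 M} x"
definition comp :: "dmap \<Rightarrow> nat \<Rightarrow> nat set" where
  "comp M x = orb (flags M) {a0 M, a1 M, a2 M} x"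

definition is_map :: "dmap \<Rightarrow> bool" where
  "is_map M \<longleftrightarrow> finite (flags M) \<and>
     (\<forall>x\<in>flags M. \<forall>f\<in>{a0 M, a1 M, a2 M}. f x \<in> flags M \<and> f (f x) = x \<and> f x \<noteq> x) \<and>
     (\<forall>x\<in>flags M. a0 M (a2 M x) = a2 M (a0 M x) \<and> a0 M (a2 M x) \<noteq> x)"

definition orientable :: "dmap \<Rightarrow> bool" where
  "orientable M \<longleftrightarrow> (\<exists>s::nat \<Rightarrow> bool. \<forall>x\<in>flags M.
      s (a0 M x) \<noteq> s x \<and> s (a1 M x) \<noteq> s x \<and> s (a2 M x) \<noteq> s x)"

definition is_bipartite :: "dmap \<Rightarrow> bool" where
  "is_bipartite M \<longleftrightarrow> (\<forall>x\<in>flags M. white M (a1 M x) = white M x \<and>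
      white M (a2 M x) = white M x \<and> white M (a0 M x) \<noteq> white M x)"

definition is_rooted :: "dmap \<Rightarrow> bool" where
  "is_rooted M \<longleftrightarrow> root M \<subseteq> flags M \<and> (\<forall>r\<in>root M. white M r) \<and>
      (\<forall>x\<in>flags M. \<exists>!r. r \<in> root M \<and> r \<in> comp M x)"

text \<open>Partitions as weakly decreasing lists of positive integers;
  boxes (i,j) with row i and column j, 1-based.\<close>

definition is_partition :: "nat list \<Rightarrow> bool" where
  "is_partition lam \<longleftrightarrow> sorted (rev lam) \<and> 0 \<notin> set lam"

definition boxes :: "nat list \<Rightarrow> (nat \<times> nat) set" where
  "boxes lam = {(i, j). 1 \<le> i \<and> i \<le> length lam \<and> 1 \<le> j \<and> j \<le> lam ! (i - 1)}"

definition conj_part :: "nat list \<Rightarrow> nat \<Rightarrow> nat" where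
  "conj_part lam j = length (filter (\<lambda>l. j \<le> l) lam)"

definition ncols :: "nat list \<Rightarrow> nat" where
  "ncols lam = (if lam = [] then 0 else hd lam)"

definition lex_le :: "nat \<times> nat \<Rightarrow> nat \<times> nat \<Rightarrow> bool" where
  "lex_le b c \<longleftrightarrow> fst b < fst c \<or> (fst b = fst c \<and> snd b \<le> snd c)"

definition is_decorated :: "nat list \<Rightarrow> dmap \<Rightarrow> bool" where
  "is_decorated lam M \<longleftrightarrow>
     (\<forall>x\<in>flags M. dec M x \<in> boxes lam \<and> dec M (a0 M x) = dec M x \<and> dec M (a2 M x) = dec M x) \<and>
     (\<forall>x\<in>flags M. \<forall>y\<in>flags M. dec M x = dec M y \<longrightarrow> y \<in> edge M x) \<and>
     (\<forall>x\<in>flags M. \<forall>y\<in>vertex M x.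
        (if white M x then snd (dec M y) = snd (dec M x) else fst (dec M y) = fst (dec M x)))"

definition rooted_dec :: "dmap \<Rightarrow> bool" where
  "rooted_dec M \<longleftrightarrow> (\<forall>r\<in>root M. \<forall>y\<in>comp M r. lex_le (dec M r) (dec M y))"

definition edges :: "dmap \<Rightarrow> nat set set" where
  "edges M = edge M ` flags M"

text \<open>Rooted lambda-injectively decorated bipartite maps with n edges,
  represented on the flag set {0..<4n}.\<close>
definition IDrep :: "nat \<Rightarrow> nat list \<Rightarrow> dmap set" where
  "IDrep n lam = {M. flags M = {0..<4 * n} \<and> card (edges M) = n \<and> is_map M \<and>
     is_bipartite M \<and> is_rooted M \<and> is_decorated lam M \<and> rooted_dec M}"

definition iso :: "dmap \<Rightarrow> dmap \<Rightarrow> bool" where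
  "iso M N \<longleftrightarrow> (\<exists>\<phi>. bij_betw \<phi> (flags M) (flags N) \<and> (\<forall>x\<in>flags M.
      \<phi> (a0 M x) = a0 N (\<phi> x) \<and> \<phi> (a1 M x) = a1 N (\<phi> x) \<and> \<phi> (a2 M x) = a2 N (\<phi> x) \<and>
      white N (\<phi> x) = white M x \<and> dec N (\<phi> x) = dec M x \<and>
      (\<phi> x \<in> root N \<longleftrightarrow> x \<in> root M)))"

definition ID :: "nat \<Rightarrow> nat list \<Rightarrow> dmap set set" where
  "ID n lam = IDrep n lam // {(M, N). M \<in> IDrep n lam \<and> N \<in> IDrep n lam \<and> iso M N}"

definition nwhite :: "dmap \<Rightarrow> nat" where
  "nwhite M = card {vertex M x | x. x \<in> flags M \<and> white M x}"

definition ncc :: "dmap \<Rightarrow> nat" where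
  "ncc M = card {comp M x | x. x \<in> flags M}"

text \<open>p_type(M) evaluated at p: product over faces of p(half-degree);
  a face of degree d has 2d flags, so its half-degree is (#flags)/4.\<close>
definition ptype :: "(nat \<Rightarrow> int) \<Rightarrow> dmap \<Rightarrow> int" where
  "ptype p M = (\<Prod>f\<in>{face M x | x. x \<in> flags M}. p (card f div 4))"

definition nonorient_stat :: "(dmap \<Rightarrow> nat) \<Rightarrow> bool" where
  "nonorient_stat th \<longleftrightarrow>
     (\<forall>M N. is_map M \<longrightarrow> iso M N \<longrightarrow> th M = th N) \<and>
     (\<forall>M. is_map M \<longrightarrow> (th M = 0 \<longleftrightarrow> orientable M))"

text \<open>F^(alpha)_{lambda,theta}, evaluated at alpha and at the power sums p_k := p k.\<close>
definition Fa :: "int \<Rightarrow> nat list \<Rightarrow> (dmap \<Rightarrow> nat) \<Rightarrow> (nat \<Rightarrow> int) \<Rightarrow> int" where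
  "Fa alpha lam th p = (let n = sum_list lam in
     (\<Sum>C\<in>ID n lam. let M = (SOME M. M \<in> C) in
        (-1) ^ (n - nwhite M) * alpha ^ (nwhite M - ncc M) * (alpha - 1) ^ th M * ptype p M))"

end

theory Submission
  imports Defs "HOL-Combinatorics.Orbits" "HOL-Library.Product_Lexorder"
begin


definition orbrel :: "nat set \<Rightarrow> (nat \<Rightarrow> nat) set \<Rightarrow> (nat \<times> nat) set" where
  "orbrel D fs = {(u, f u) | u f. u \<in> D \<and> f \<in> fs}"

lemma orb_def2: "orb D fs x = {y. (x, y) \<in> (orbrel D fs)\<^sup>*}"
  unfolding orb_def orbrel_def by simp

lemma orb_self[simp]: "x \<in> orb D fs x"
  unfolding orb_def2 by simp

lemma orb_step: "y \<in> orb D fs x \<Longrightarrow> y \<in> D \<Longrightarrow> f \<in> fs \<Longrightarrow> f y \<in> orb D fs x"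
  unfolding orb_def2 orbrel_def
  by (auto intro: rtrancl_into_rtrancl)

lemma orb_closed:
  assumes "x \<in> S" "\<And>u f. u \<in> S \<Longrightarrow> u \<in> D \<Longrightarrow> f \<in> fs \<Longrightarrow> f u \<in> S"
  shows "orb D fs x \<subseteq> S"
proof
  fix y assume "y \<in> orb D fs x"
  then have "(x, y) \<in> (orbrel D fs)\<^sup>*" unfolding orb_def2 by simp
  then show "y \<in> S"
    by (induction rule: rtrancl_induct) (use assms in \<open>auto simp: orbrel_def\<close>)
qed

lemma orb_trans: "y \<in> orb D fs x \<Longrightarrow> z \<in> orb D fs y \<Longrightarrow> z \<in> orb D fs x"
  unfolding orb_def2 by auto

lemma orb_mono: "fs \<subseteq> gs \<Longrightarrow> orb D fs x \<subseteq> orb D gs x"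
  by (rule orb_closed) (auto intro: orb_step)

definition invol :: "nat set \<Rightarrow> (nat \<Rightarrow> nat) set \<Rightarrow> bool" where
  "invol D fs \<longleftrightarrow> (\<forall>f\<in>fs. \<forall>u\<in>D. f u \<in> D \<and> f (f u) = u)"

lemma orb_subset_D: "invol D fs \<Longrightarrow> x \<in> D \<Longrightarrow> orb D fs x \<subseteq> D"
  by (rule orb_closed) (auto simp: invol_def)

lemma orb_sym:
  assumes "invol D fs" "x \<in> D" "y \<in> orb D fs x"
  shows "x \<in> orb D fs y"
proof -
  have "(x, y) \<in> (orbrel D fs)\<^sup>*" using assms(3) unfolding orb_def2 by simp
  then show ?thesis
  proof (induction rule: rtrancl_induct)
    case base then show ?case by simp
  next
    case (step y z)
    then obtain f where f: "y \<in> D" "f \<in> fs" "z = f y" by (auto simp: orbrel_def)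
    have "z \<in> D" "f z = y" using assms(1) f by (auto simp: invol_def)
    then have "y \<in> orb D fs z" using orb_step[of z D fs z f] f by simp
    then show ?case using step(3) orb_trans by blast
  qed
qed

lemma orb_eq:
  assumes "invol D fs" "x \<in> D" "y \<in> orb D fs x"
  shows "orb D fs y = orb D fs x"
proof
  show "orb D fs y \<subseteq> orb D fs x" using orb_trans[OF assms(3)] by blast
  have "x \<in> orb D fs y" using orb_sym[OF assms] .
  then show "orb D fs x \<subseteq> orb D fs y" using orb_trans by blast
qed

lemma orb_eq2:
  assumes "invol D fs" "x \<in> D" "z \<in> orb D fs x" "z \<in> orb D fs y" "y \<in> D"
  shows "orb D fs y = orb D fs x"
  using orb_eq[OF assms(1,2,3)] orb_eq[OF assms(1,5,4)] by simp

lemma orb_finite: "invol D fs \<Longrightarrow> finite D \<Longrightarrow> x \<in> D \<Longrightarrow> finite (orb D fs x)"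
  by (rule finite_subset[OF orb_subset_D]) auto

lemma orb_image:
  assumes cl: "\<And>f u. f \<in> fs \<Longrightarrow> u \<in> D \<Longrightarrow> f u \<in> D"
    and ph: "\<And>u. u \<in> D \<Longrightarrow> \<phi> u \<in> D'"
    and H1: "\<And>f u. f \<in> fs \<Longrightarrow> u \<in> D \<Longrightarrow> \<exists>g\<in>gs. \<phi> (f u) = g (\<phi> u)"
    and H2: "\<And>g u. g \<in> gs \<Longrightarrow> u \<in> D \<Longrightarrow> \<exists>f\<in>fs. g (\<phi> u) = \<phi> (f u)"
    and x: "x \<in> D"
  shows "\<phi> ` orb D fs x = orb D' gs (\<phi> x)"
proof
  have sub: "orb D fs x \<subseteq> D" by (rule orb_closed) (use x cl in auto)
  show "\<phi> ` orb D fs x \<subseteq> orb D' gs (\<phi> x)"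
  proof -
    have "orb D fs x \<subseteq> {u. \<phi> u \<in> orb D' gs (\<phi> x)}"
    proof (rule orb_closed)
      fix u f assume "u \<in> {u. \<phi> u \<in> orb D' gs (\<phi> x)}" "u \<in> D" "f \<in> fs"
      then show "f u \<in> {u. \<phi> u \<in> orb D' gs (\<phi> x)}"
        using H1[of f u] ph[of u] orb_step by fastforce
    qed simp
    then show ?thesis by blast
  qed
  show "orb D' gs (\<phi> x) \<subseteq> \<phi> ` orb D fs x"
  proof (rule orb_closed)
    fix v g assume v: "v \<in> \<phi> ` orb D fs x" "v \<in> D'" "g \<in> gs"
    then obtain u where u: "u \<in> orb D fs x" "v = \<phi> u" by auto
    have "u \<in> D" using u sub by auto
    then obtain f where "f \<in> fs" "g (\<phi> u) = \<phi> (f u)" using H2 v(3) by blast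
    then show "g v \<in> \<phi> ` orb D fs x" using u \<open>u \<in> D\<close> orb_step by auto
  qed (use x in auto)
qed

lemma map_facts:
  assumes "is_map M" "x \<in> flags M"
  shows "a0 M x \<in> flags M" "a1 M x \<in> flags M" "a2 M x \<in> flags M"
    "a0 M (a0 M x) = x" "a1 M (a1 M x) = x" "a2 M (a2 M x) = x"
    "a0 M x \<noteq> x" "a1 M x \<noteq> x" "a2 M x \<noteq> x"
    "a0 M (a2 M x) = a2 M (a0 M x)" "a0 M (a2 M x) \<noteq> x"
  using assms unfolding is_map_def by auto

lemma map_invol:
  assumes "is_map M" "fs \<subseteq> {a0 M, a1 M, a2 M}"
  shows "invol (flags M) fs"
  unfolding invol_def
proof (intro ballI)
  fix f u assume "f \<in> fs" "u \<in> flags M"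
  then have "f = a0 M \<or> f = a1 M \<or> f = a2 M" using assms(2) by blast
  then show "f u \<in> flags M \<and> f (f u) = u" using map_facts[OF assms(1) \<open>u \<in> flags M\<close>] by auto
qed

lemma vertex_sub_comp: "vertex M x \<subseteq> comp M x"
  unfolding vertex_def comp_def by (rule orb_mono) auto
lemma edge_sub_comp: "edge M x \<subseteq> comp M x"
  unfolding edge_def comp_def by (rule orb_mono) auto
lemma face_sub_comp: "face M x \<subseteq> comp M x"
  unfolding face_def comp_def by (rule orb_mono) auto

lemma edge_explicit:
  assumes "is_map M" "x \<in> flags M"
  shows "edge M x = {x, a0 M x, a2 M x, a0 M (a2 M x)}"
proof
  note f = map_facts[OF assms]
  show "edge M x \<subseteq> {x, a0 M x, a2 M x, a0 M (a2 M x)}"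
    unfolding edge_def
  proof (rule orb_closed)
    fix u g assume u: "u \<in> {x, a0 M x, a2 M x, a0 M (a2 M x)}" "u \<in> flags M" "g \<in> {a0 M, a2 M}"
    then show "g u \<in> {x, a0 M x, a2 M x, a0 M (a2 M x)}"
      using f map_facts[OF assms(1) f(1)] by auto
  qed simp
  have "a0 M x \<in> edge M x" "a2 M x \<in> edge M x" unfolding edge_def
    using orb_step[of x "flags M" "{a0 M, a2 M}" x] assms by auto
  moreover have "a0 M (a2 M x) \<in> edge M x" unfolding edge_def
    using orb_step[of "a2 M x" "flags M" "{a0 M, a2 M}" x "a0 M"] f \<open>a2 M x \<in> edge M x\<close>
    unfolding edge_def by auto
  ultimately show "{x, a0 M x, a2 M x, a0 M (a2 M x)} \<subseteq> edge M x"
    unfolding edge_def by auto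
qed

definition iso_by :: "(nat \<Rightarrow> nat) \<Rightarrow> dmap \<Rightarrow> dmap \<Rightarrow> bool" where
  "iso_by \<phi> M N \<longleftrightarrow> bij_betw \<phi> (flags M) (flags N) \<and> (\<forall>x\<in>flags M.
      \<phi> (a0 M x) = a0 N (\<phi> x) \<and> \<phi> (a1 M x) = a1 N (\<phi> x) \<and> \<phi> (a2 M x) = a2 N (\<phi> x) \<and>
      white N (\<phi> x) = white M x \<and> dec N (\<phi> x) = dec M x \<and>
      (\<phi> x \<in> root N \<longleftrightarrow> x \<in> root M))"

lemma iso_iff: "iso M N \<longleftrightarrow> (\<exists>\<phi>. iso_by \<phi> M N)"
  unfolding iso_def iso_by_def by simp

lemma iso_refl: "iso M M"
  unfolding iso_iff iso_by_def by (rule exI[of _ id]) auto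

lemma iso_sym:
  assumes "is_map M" "iso M N" shows "iso N M"
proof -
  obtain \<phi> where p: "iso_by \<phi> M N" using assms iso_iff by blast
  let ?\<psi> = "inv_into (flags M) \<phi>"
  have b: "bij_betw \<phi> (flags M) (flags N)" using p iso_by_def by blast
  have b2: "bij_betw ?\<psi> (flags N) (flags M)" using bij_betw_inv_into[OF b] .
  have "iso_by ?\<psi> N M"
    unfolding iso_by_def
  proof (intro conjI b2 ballI)
    fix y assume y: "y \<in> flags N"
    obtain x where x: "x \<in> flags M" "y = \<phi> x" using y bij_betw_imp_surj_on[OF b] by (metis imageE)
    have px: "?\<psi> y = x" using x b bij_betw_inv_into_left by fastforce
    have pr: "\<And>z. z \<in> flags M \<Longrightarrow> ?\<psi> (\<phi> z) = z" using b bij_betw_inv_into_left by fastforce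
    note f = map_facts[OF assms(1) x(1)]
    have c: "\<phi> (a0 M x) = a0 N (\<phi> x)" "\<phi> (a1 M x) = a1 N (\<phi> x)" "\<phi> (a2 M x) = a2 N (\<phi> x)"
      "white N (\<phi> x) = white M x" "dec N (\<phi> x) = dec M x" "(\<phi> x \<in> root N \<longleftrightarrow> x \<in> root M)"
      using p x(1) unfolding iso_by_def by auto
    show "?\<psi> (a0 N y) = a0 M (?\<psi> y)" using c(1) pr f(1) px x(2) by metis
    show "?\<psi> (a1 N y) = a1 M (?\<psi> y)" using c(2) pr f(2) px x(2) by metis
    show "?\<psi> (a2 N y) = a2 M (?\<psi> y)" using c(3) pr f(3) px x(2) by metis
    show "white M (?\<psi> y) = white N y" using c px x by simp
    show "dec M (?\<psi> y) = dec N y" using c px x by simp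
    show "(?\<psi> y \<in> root M) = (y \<in> root N)" using c px x by simp
  qed
  then show ?thesis using iso_iff by blast
qed

lemma iso_trans:
  assumes "iso M N" "iso N K" shows "iso M K"
proof -
  obtain \<phi> where p: "iso_by \<phi> M N" using assms iso_iff by blast
  obtain \<psi> where q: "iso_by \<psi> N K" using assms iso_iff by blast
  have b: "bij_betw \<phi> (flags M) (flags N)" "bij_betw \<psi> (flags N) (flags K)"
    using p q iso_by_def by blast+
  have "iso_by (\<psi> \<circ> \<phi>) M K"
    unfolding iso_by_def
  proof (intro conjI ballI)
    show "bij_betw (\<psi> \<circ> \<phi>) (flags M) (flags K)" using bij_betw_trans b by blast
    fix x assume x: "x \<in> flags M"
    have y: "\<phi> x \<in> flags N" by (rule bij_betw_apply[OF b(1) x])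
    show "(\<psi> \<circ> \<phi>) (a0 M x) = a0 K ((\<psi> \<circ> \<phi>) x)" using p q x y unfolding iso_by_def by auto
    show "(\<psi> \<circ> \<phi>) (a1 M x) = a1 K ((\<psi> \<circ> \<phi>) x)" using p q x y unfolding iso_by_def by auto
    show "(\<psi> \<circ> \<phi>) (a2 M x) = a2 K ((\<psi> \<circ> \<phi>) x)" using p q x y unfolding iso_by_def by auto
    show "white K ((\<psi> \<circ> \<phi>) x) = white M x" using p q x y unfolding iso_by_def by auto
    show "dec K ((\<psi> \<circ> \<phi>) x) = dec M x" using p q x y unfolding iso_by_def by auto
    show "((\<psi> \<circ> \<phi>) x \<in> root K) = (x \<in> root M)" using p q x y unfolding iso_by_def by auto
  qed
  then show ?thesis using iso_iff by blast
qed

lemma iso_orb: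
  assumes "iso_by \<phi> M N" "is_map M" "x \<in> flags M"
    and "fs \<subseteq> {a0 M, a1 M, a2 M}" "S \<subseteq> {0,1,2::nat}"
    and "fs = (\<lambda>i. if i = 0 then a0 M else if i = 1 then a1 M else a2 M) ` S"
    and "gs = (\<lambda>i. if i = 0 then a0 N else if i = 1 then a1 N else a2 N) ` S"
  shows "\<phi> ` orb (flags M) fs x = orb (flags N) gs (\<phi> x)"
proof (rule orb_image)
  have b: "bij_betw \<phi> (flags M) (flags N)" using assms(1) iso_by_def by blast
  show "\<And>f u. f \<in> fs \<Longrightarrow> u \<in> flags M \<Longrightarrow> f u \<in> flags M"
    using map_invol[OF assms(2,4)] unfolding invol_def by blast
  show "\<And>u. u \<in> flags M \<Longrightarrow> \<phi> u \<in> flags N" by (rule bij_betw_apply[OF b])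
  show "\<And>f u. f \<in> fs \<Longrightarrow> u \<in> flags M \<Longrightarrow> \<exists>g\<in>gs. \<phi> (f u) = g (\<phi> u)"
    using assms(1,5,6,7) unfolding iso_by_def by auto
  show "\<And>g u. g \<in> gs \<Longrightarrow> u \<in> flags M \<Longrightarrow> \<exists>f\<in>fs. g (\<phi> u) = \<phi> (f u)"
  proof -
    fix g u assume g: "g \<in> gs" and u: "u \<in> flags M"
    then obtain i where i: "i \<in> S" "g = (if i = 0 then a0 N else if i = 1 then a1 N else a2 N)"
      using assms(7) by blast
    have fi: "(if i = 0 then a0 M else if i = 1 then a1 M else a2 M) \<in> fs" using assms(6) i(1) by blast
    have c: "\<phi> (a0 M u) = a0 N (\<phi> u)" "\<phi> (a1 M u) = a1 N (\<phi> u)" "\<phi> (a2 M u) = a2 N (\<phi> u)"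
      using assms(1) u unfolding iso_by_def by auto
    show "\<exists>f\<in>fs. g (\<phi> u) = \<phi> (f u)"
      by (rule bexI[OF _ fi]) (use c i in auto)
  qed
qed (use assms in auto)

lemma iso_vertex: "iso_by \<phi> M N \<Longrightarrow> is_map M \<Longrightarrow> x \<in> flags M \<Longrightarrow> \<phi> ` vertex M x = vertex N (\<phi> x)"
  unfolding vertex_def by (rule iso_orb[where S="{1,2}"]) auto
lemma iso_edge: "iso_by \<phi> M N \<Longrightarrow> is_map M \<Longrightarrow> x \<in> flags M \<Longrightarrow> \<phi> ` edge M x = edge N (\<phi> x)"
  unfolding edge_def by (rule iso_orb[where S="{0,2}"]) auto
lemma iso_face: "iso_by \<phi> M N \<Longrightarrow> is_map M \<Longrightarrow> x \<in> flags M \<Longrightarrow> \<phi> ` face M x = face N (\<phi> x)"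
  unfolding face_def by (rule iso_orb[where S="{0,1}"]) auto
lemma iso_comp: "iso_by \<phi> M N \<Longrightarrow> is_map M \<Longrightarrow> x \<in> flags M \<Longrightarrow> \<phi> ` comp M x = comp N (\<phi> x)"
  unfolding comp_def by (rule iso_orb[where S="{0,1,2}"]) auto

lemma card_image_sets:
  assumes "inj_on \<phi> D" "\<forall>A\<in>F. A \<subseteq> D"
  shows "card ((\<lambda>A. \<phi> ` A) ` F) = card F"
proof (rule card_image)
  show "inj_on (\<lambda>A. \<phi> ` A) F"
    using assms by (smt (verit, best) inj_onI inj_on_image_eq_iff)
qed

lemma iso_sets:
  assumes "iso_by \<phi> M N" "is_map M"
    and "\<And>x. x \<in> flags M \<Longrightarrow> \<phi> ` (Ob M x) = Ob N (\<phi> x)"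
    and "\<And>x. x \<in> flags M \<Longrightarrow> Ob M x \<subseteq> flags M"
    and "\<And>x. x \<in> flags M \<Longrightarrow> P N (\<phi> x) = P M x"
  shows "{Ob N y | y. y \<in> flags N \<and> P N y} = (\<lambda>A. \<phi> ` A) ` {Ob M x | x. x \<in> flags M \<and> P M x}"
    "card {Ob N y | y. y \<in> flags N \<and> P N y} = card {Ob M x | x. x \<in> flags M \<and> P M x}"
proof -
  have b: "bij_betw \<phi> (flags M) (flags N)" using assms(1) iso_by_def by blast
  show e: "{Ob N y | y. y \<in> flags N \<and> P N y} = (\<lambda>A. \<phi> ` A) ` {Ob M x | x. x \<in> flags M \<and> P M x}"
  proof (intro set_eqI iffI)
    fix A assume "A \<in> {Ob N y | y. y \<in> flags N \<and> P N y}"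
    then obtain y where y: "y \<in> flags N" "P N y" "A = Ob N y" by auto
    obtain x where x: "x \<in> flags M" "y = \<phi> x" using y bij_betw_imp_surj_on[OF b] by (metis imageE)
    show "A \<in> (\<lambda>A. \<phi> ` A) ` {Ob M x | x. x \<in> flags M \<and> P M x}"
      using x y assms(3,5) by auto
  next
    fix A assume "A \<in> (\<lambda>A. \<phi> ` A) ` {Ob M x | x. x \<in> flags M \<and> P M x}"
    then obtain x where x: "x \<in> flags M" "P M x" "A = \<phi> ` Ob M x" by auto
    then show "A \<in> {Ob N y | y. y \<in> flags N \<and> P N y}"
      using assms(3,5) bij_betw_apply[OF b] by fastforce
  qed
  show "card {Ob N y | y. y \<in> flags N \<and> P N y} = card {Ob M x | x. x \<in> flags M \<and> P M x}"
    unfolding e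
    by (rule card_image_sets[where D="flags M"]) (use b assms(4) in \<open>auto simp: bij_betw_def\<close>)
qed

lemma map_orb_sub:
  assumes "is_map M" "x \<in> flags M"
  shows "vertex M x \<subseteq> flags M" "edge M x \<subseteq> flags M" "face M x \<subseteq> flags M" "comp M x \<subseteq> flags M"
  unfolding vertex_def edge_def face_def comp_def
  using orb_subset_D[OF map_invol[OF assms(1)] assms(2)] by auto

lemma iso_nwhite: assumes "iso_by \<phi> M N" "is_map M" shows "nwhite N = nwhite M"
  unfolding nwhite_def
proof (rule iso_sets(2)[where Ob=vertex and P=white, OF assms])
  show "\<And>x. x \<in> flags M \<Longrightarrow> \<phi> ` vertex M x = vertex N (\<phi> x)" using iso_vertex[OF assms] .
  show "\<And>x. x \<in> flags M \<Longrightarrow> vertex M x \<subseteq> flags M" using map_orb_sub[OF assms(2)] by blast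
  show "\<And>x. x \<in> flags M \<Longrightarrow> white N (\<phi> x) = white M x" using assms(1) unfolding iso_by_def by blast
qed

lemma iso_ncc: assumes "iso_by \<phi> M N" "is_map M" shows "ncc N = ncc M"
proof -
  have "card {comp N y | y. y \<in> flags N \<and> True} = card {comp M x | x. x \<in> flags M \<and> True}"
  proof (rule iso_sets(2)[where Ob=comp and P="\<lambda>_ _. True", OF assms])
    show "\<And>x. x \<in> flags M \<Longrightarrow> \<phi> ` comp M x = comp N (\<phi> x)" using iso_comp[OF assms] .
    show "\<And>x. x \<in> flags M \<Longrightarrow> comp M x \<subseteq> flags M" using map_orb_sub[OF assms(2)] by blast
  qed simp
  then show ?thesis unfolding ncc_def by simp
qed

lemma iso_ptype: assumes "iso_by \<phi> M N" "is_map M" shows "ptype p N = ptype p M"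
proof -
  have b: "bij_betw \<phi> (flags M) (flags N)" using assms(1) iso_by_def by blast
  have "{face N y | y. y \<in> flags N \<and> True} = (\<lambda>A. \<phi> ` A) ` {face M x | x. x \<in> flags M \<and> True}"
  proof (rule iso_sets(1)[where Ob=face and P="\<lambda>_ _. True", OF assms])
    show "\<And>x. x \<in> flags M \<Longrightarrow> \<phi> ` face M x = face N (\<phi> x)" using iso_face[OF assms] .
    show "\<And>x. x \<in> flags M \<Longrightarrow> face M x \<subseteq> flags M" using map_orb_sub[OF assms(2)] by blast
  qed simp
  then have e: "{face N y | y. y \<in> flags N} = (\<lambda>A. \<phi> ` A) ` {face M x | x. x \<in> flags M}" by simp
  have inj: "inj_on (\<lambda>A. \<phi> ` A) {face M x | x. x \<in> flags M}"
    using b map_orb_sub[OF assms(2)] unfolding bij_betw_def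
    by (smt (verit, best) inj_onI inj_on_image_eq_iff mem_Collect_eq)
  have c: "\<And>A. A \<in> {face M x | x. x \<in> flags M} \<Longrightarrow> card (\<phi> ` A) = card A"
  proof -
    fix A assume "A \<in> {face M x | x. x \<in> flags M}"
    then have "A \<subseteq> flags M" using map_orb_sub(3)[OF assms(2)] by fastforce
    moreover have "inj_on \<phi> (flags M)" using b unfolding bij_betw_def by simp
    ultimately show "card (\<phi> ` A) = card A" by (meson card_image inj_on_subset)
  qed
  show ?thesis unfolding ptype_def e prod.reindex[OF inj] o_def
    using c by (intro prod.cong) auto
qed


lemma lex_le_iff: "lex_le b c \<longleftrightarrow> b \<le> c"
  unfolding lex_le_def by (cases b; cases c) auto

lemma perm_orbit_facts:
  assumes "\<sigma> permutes B" "finite B" "b \<in> B"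
  shows "b \<in> orbit \<sigma> b" "orbit \<sigma> b \<subseteq> B" "\<sigma> b \<in> orbit \<sigma> b" "inv \<sigma> b \<in> orbit \<sigma> b"
    "finite (orbit \<sigma> b)"
    "\<And>c. c \<in> orbit \<sigma> b \<Longrightarrow> orbit \<sigma> c = orbit \<sigma> b"
proof -
  have p: "permutation \<sigma>" using assms permutation_permutes by blast
  show "b \<in> orbit \<sigma> b" using permutation_self_in_orbit[OF p] .
  show "orbit \<sigma> b \<subseteq> B" using permutes_orbit_subset[OF assms(1,3)] .
  then show "finite (orbit \<sigma> b)" using assms(2) finite_subset by blast
  show "\<sigma> b \<in> orbit \<sigma> b" by (rule orbit.base)
  have "inv \<sigma> b \<in> orbit (inv \<sigma>) b" by (rule orbit.base)
  then show "inv \<sigma> b \<in> orbit \<sigma> b" using orbit_inv_eq[OF p] by simp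
  show "\<And>c. c \<in> orbit \<sigma> b \<Longrightarrow> orbit \<sigma> c = orbit \<sigma> b"
    using cyclic_on_orbit[OF assms(1,2)] orbit_cyclic_eq3 by metis
qed

locale canon =
  fixes B :: "(nat \<times> nat) set" and idx :: "nat \<times> nat \<Rightarrow> nat" and \<sigma> :: "nat \<times> nat \<Rightarrow> nat \<times> nat"
  assumes finB: "finite B" and bij: "bij_betw idx B {0..<card B}" and perm: "\<sigma> permutes B"
begin

definition bx :: "nat \<Rightarrow> nat \<times> nat" where "bx q = inv_into B idx q"
definition F :: "nat \<times> nat \<Rightarrow> nat \<Rightarrow> nat" where "F b t = 4 * idx b + t"

definition Can :: dmap where
  "Can = \<lparr> flags = {0..<4 * card B},
     a0 = (\<lambda>x. if x mod 4 < 2 then x + 2 else x - 2),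
     a1 = (\<lambda>x. if x mod 4 = 0 then F (\<sigma> (bx (x div 4))) 1
              else if x mod 4 = 1 then F (inv \<sigma> (bx (x div 4))) 0
              else if even x then x + 1 else x - 1),
     a2 = (\<lambda>x. if even x then x + 1 else x - 1),
     white = (\<lambda>x. x mod 4 < 2),
     root = {F b 0 | b. b \<in> B \<and> b = Min (orbit \<sigma> b)},
     dec = (\<lambda>x. bx (x div 4)) \<rparr>"

lemma idx_lt: "b \<in> B \<Longrightarrow> idx b < card B"
  using bij bij_betw_apply by fastforce

lemma bx_idx[simp]: "b \<in> B \<Longrightarrow> bx (idx b) = b"
  unfolding bx_def using bij bij_betw_inv_into_left by fastforce

lemma idx_inj: "b \<in> B \<Longrightarrow> c \<in> B \<Longrightarrow> idx b = idx c \<longleftrightarrow> b = c"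
  using bij unfolding bij_betw_def inj_on_def by blast

lemma F_div[simp]: "t < 4 \<Longrightarrow> F b t div 4 = idx b" unfolding F_def by simp
lemma F_mod[simp]: "t < 4 \<Longrightarrow> F b t mod 4 = t" unfolding F_def by simp

lemma F_inj: "b \<in> B \<Longrightarrow> c \<in> B \<Longrightarrow> t < 4 \<Longrightarrow> t' < 4 \<Longrightarrow> F b t = F c t' \<longleftrightarrow> b = c \<and> t = t'"
proof
  assume a: "b \<in> B" "c \<in> B" "t < 4" "t' < 4" "F b t = F c t'"
  then have "idx b = idx c" "t = t'" using F_div F_mod by metis+
  then show "b = c \<and> t = t'" using idx_inj a by blast
qed auto

lemma F_range: "b \<in> B \<Longrightarrow> t < 4 \<Longrightarrow> F b t \<in> flags Can"
  unfolding Can_def F_def using idx_lt[of b] by simp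

lemma flag_cases:
  assumes "x \<in> flags Can"
  obtains b t where "b \<in> B" "t < 4" "x = F b t"
proof -
  have x: "x < 4 * card B" using assms unfolding Can_def by simp
  have q: "x div 4 \<in> {0..<card B}" using x by auto
  let ?b = "bx (x div 4)"
  have "?b \<in> B" unfolding bx_def using q bij by (metis bij_betw_def inv_into_into)
  moreover have "idx ?b = x div 4" unfolding bx_def using q bij
    by (meson bij_betw_inv_into_right)
  ultimately show ?thesis using that[of ?b "x mod 4"] unfolding F_def by simp
qed

lemma sigma_in: "b \<in> B \<Longrightarrow> \<sigma> b \<in> B" using perm by (simp add: permutes_in_image)
lemma invsigma_in: "b \<in> B \<Longrightarrow> inv \<sigma> b \<in> B"
  using permutes_in_image[OF permutes_inv[OF perm]] by simp

lemma F_even: "even (F b t) \<longleftrightarrow> even t" unfolding F_def by simp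

lemma F_arith:
  "F b 0 + 2 = F b 2" "F b 1 + 2 = F b 3" "F b 2 - 2 = F b 0" "F b 3 - 2 = F b 1"
  "F b 0 + 1 = F b 1" "F b 1 - 1 = F b 0" "F b 2 + 1 = F b 3" "F b 3 - 1 = F b 2"
  unfolding F_def by simp_all

lemma Can_a0: "a0 Can x = (if x mod 4 < 2 then x + 2 else x - 2)" by (simp add: Can_def)
lemma Can_a1: "a1 Can x = (if x mod 4 = 0 then F (\<sigma> (bx (x div 4))) 1
              else if x mod 4 = 1 then F (inv \<sigma> (bx (x div 4))) 0
              else if even x then x + 1 else x - 1)" by (simp add: Can_def)
lemma Can_a2: "a2 Can x = (if even x then x + 1 else x - 1)" by (simp add: Can_def)
lemma Can_white: "white Can x = (x mod 4 < 2)" by (simp add: Can_def)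
lemma Can_dec: "dec Can x = bx (x div 4)" by (simp add: Can_def)

lemma Can_simps:
  assumes "b \<in> B"
  shows "a0 Can (F b 0) = F b 2" "a0 Can (F b 1) = F b 3" "a0 Can (F b 2) = F b 0" "a0 Can (F b 3) = F b 1"
    "a1 Can (F b 0) = F (\<sigma> b) 1" "a1 Can (F b 1) = F (inv \<sigma> b) 0" "a1 Can (F b 2) = F b 3" "a1 Can (F b 3) = F b 2"
    "a2 Can (F b 0) = F b 1" "a2 Can (F b 1) = F b 0" "a2 Can (F b 2) = F b 3" "a2 Can (F b 3) = F b 2"
    "t < 4 \<Longrightarrow> white Can (F b t) \<longleftrightarrow> t < 2"
    "t < 4 \<Longrightarrow> dec Can (F b t) = b"
  using assms
  apply (simp_all add: Can_a0 Can_a1 Can_a2 Can_white Can_dec F_mod F_div F_even)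
  apply (simp_all add: F_def)
  done

lemma Can_flags: "flags Can = {0..<4 * card B}" unfolding Can_def by simp
lemma Can_root: "root Can = {F b 0 | b. b \<in> B \<and> b = Min (orbit \<sigma> b)}" unfolding Can_def by simp

lemma Can_is_map: "is_map Can"
  unfolding is_map_def
proof (intro conjI)
  show "finite (flags Can)" unfolding Can_def by simp
  show "\<forall>x\<in>flags Can. \<forall>f\<in>{a0 Can, a1 Can, a2 Can}. f x \<in> flags Can \<and> f (f x) = x \<and> f x \<noteq> x"
  proof (intro ballI)
    fix x f assume x: "x \<in> flags Can" and f: "f \<in> {a0 Can, a1 Can, a2 Can}"
    obtain b t where bt: "b \<in> B" "t < 4" "x = F b t" using flag_cases[OF x] by blast
    have t: "t = 0 \<or> t = 1 \<or> t = 2 \<or> t = 3" using bt by auto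
    have sb: "\<sigma> b \<in> B" "inv \<sigma> b \<in> B" using sigma_in invsigma_in bt by auto
    have si: "inv \<sigma> (\<sigma> b) = b" "\<sigma> (inv \<sigma> b) = b" using perm
      by (simp_all add: permutes_inverses)
    have r: "\<And>c t. c \<in> B \<Longrightarrow> t < 4 \<Longrightarrow> F c t \<in> flags Can" using F_range by blast
    have ne: "\<And>c t t'. c \<in> B \<Longrightarrow> t < 4 \<Longrightarrow> t' < 4 \<Longrightarrow> t \<noteq> t' \<Longrightarrow> F c t \<noteq> F b t'"
      using F_inj bt(1) by blast
    show "f x \<in> flags Can \<and> f (f x) = x \<and> f x \<noteq> x"
      using f t bt sb Can_simps[OF bt(1)] Can_simps[OF sb(1)] Can_simps[OF sb(2)] si
        r[OF bt(1)] r[OF sb(1)] r[OF sb(2)] ne[OF bt(1)] ne[OF sb(1)] ne[OF sb(2)]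
      by (elim disjE insertE) auto
  qed
  show "\<forall>x\<in>flags Can. a0 Can (a2 Can x) = a2 Can (a0 Can x) \<and> a0 Can (a2 Can x) \<noteq> x"
  proof (intro ballI)
    fix x assume x: "x \<in> flags Can"
    obtain b t where bt: "b \<in> B" "t < 4" "x = F b t" using flag_cases[OF x] by blast
    have t: "t = 0 \<or> t = 1 \<or> t = 2 \<or> t = 3" using bt by auto
    have ne: "\<And>t t'. t < 4 \<Longrightarrow> t' < 4 \<Longrightarrow> t \<noteq> t' \<Longrightarrow> F b t \<noteq> F b t'"
      using F_inj bt(1) by blast
    show "a0 Can (a2 Can x) = a2 Can (a0 Can x) \<and> a0 Can (a2 Can x) \<noteq> x"
      using t bt Can_simps[OF bt(1)] ne by (elim disjE) auto
  qed
qed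

lemma Can_bip: "is_bipartite Can"
  unfolding is_bipartite_def
proof (intro ballI)
  fix x assume x: "x \<in> flags Can"
  obtain b t where bt: "b \<in> B" "t < 4" "x = F b t" using flag_cases[OF x] by blast
  have t: "t = 0 \<or> t = 1 \<or> t = 2 \<or> t = 3" using bt by auto
  show "white Can (a1 Can x) = white Can x \<and> white Can (a2 Can x) = white Can x \<and> white Can (a0 Can x) \<noteq> white Can x"
    using t bt Can_simps[OF bt(1)] Can_simps[OF sigma_in[OF bt(1)]] Can_simps[OF invsigma_in[OF bt(1)]]
    by (elim disjE) auto
qed

lemma Can_orientable: "orientable Can"
  unfolding orientable_def
proof (intro exI ballI)
  fix x assume x: "x \<in> flags Can"
  obtain b t where bt: "b \<in> B" "t < 4" "x = F b t" using flag_cases[OF x] by blast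
  have t: "t = 0 \<or> t = 1 \<or> t = 2 \<or> t = 3" using bt by auto
  let ?s = "\<lambda>x. x mod 4 = 0 \<or> x mod 4 = 3"
  show "?s (a0 Can x) \<noteq> ?s x \<and> ?s (a1 Can x) \<noteq> ?s x \<and> ?s (a2 Can x) \<noteq> ?s x"
    using t bt Can_simps[OF bt(1)] by (elim disjE) auto
qed

definition Cset :: "nat \<times> nat \<Rightarrow> nat set" where
  "Cset b = {F c t | c t. c \<in> orbit \<sigma> b \<and> t < 4}"
definition Vset :: "nat \<times> nat \<Rightarrow> nat set" where
  "Vset b = {F c t | c t. c \<in> orbit \<sigma> b \<and> t < 2}"

lemma orb_facts: "b \<in> B \<Longrightarrow> b \<in> orbit \<sigma> b" "b \<in> B \<Longrightarrow> orbit \<sigma> b \<subseteq> B"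
  "b \<in> B \<Longrightarrow> \<sigma> b \<in> orbit \<sigma> b" "b \<in> B \<Longrightarrow> inv \<sigma> b \<in> orbit \<sigma> b"
  "b \<in> B \<Longrightarrow> finite (orbit \<sigma> b)"
  "b \<in> B \<Longrightarrow> c \<in> orbit \<sigma> b \<Longrightarrow> orbit \<sigma> c = orbit \<sigma> b"
  using perm_orbit_facts[OF perm finB] by blast+

lemma orbit_closed:
  assumes "b \<in> B" "c \<in> orbit \<sigma> b"
  shows "\<sigma> c \<in> orbit \<sigma> b" "inv \<sigma> c \<in> orbit \<sigma> b" "c \<in> B"
proof -
  show "c \<in> B" using orb_facts(2)[OF assms(1)] assms(2) by blast
  then show "\<sigma> c \<in> orbit \<sigma> b" "inv \<sigma> c \<in> orbit \<sigma> b"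
    using orb_facts(3,4,6)[OF \<open>c \<in> B\<close>] orb_facts(6)[OF assms] by auto
qed

lemma Fin: "c \<in> B \<Longrightarrow> t < 4 \<Longrightarrow> F c t \<in> flags Can" using F_range by blast

lemma face_step:
  assumes "c \<in> B" "F c 0 \<in> face Can x"
  shows "F c 1 \<in> face Can x" "F c 2 \<in> face Can x" "F c 3 \<in> face Can x" "F (\<sigma> c) 0 \<in> face Can x"
proof -
  note st = orb_step[where D="flags Can" and fs="{a0 Can, a1 Can}", folded face_def]
  have sc: "\<sigma> c \<in> B" using sigma_in assms by blast
  note cs = Can_simps[OF assms(1)] Can_simps[OF sc]
  have 2: "F c 2 \<in> face Can x" using st[OF assms(2) Fin[OF assms(1)], of "a0 Can"] cs by simp
  have 3: "F c 3 \<in> face Can x" using st[OF 2 Fin[OF assms(1)], of "a1 Can"] cs by simp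
  have 1: "F c 1 \<in> face Can x" using st[OF 3 Fin[OF assms(1)], of "a0 Can"] cs by simp
  have s1: "F (\<sigma> c) 1 \<in> face Can x" using st[OF assms(2) Fin[OF assms(1)], of "a1 Can"] cs by simp
  have s3: "F (\<sigma> c) 3 \<in> face Can x" using st[OF s1 Fin[OF sc], of "a0 Can"] cs by simp
  have s2: "F (\<sigma> c) 2 \<in> face Can x" using st[OF s3 Fin[OF sc], of "a1 Can"] cs by simp
  have s0: "F (\<sigma> c) 0 \<in> face Can x" using st[OF s2 Fin[OF sc], of "a0 Can"] cs by simp
  show "F c 1 \<in> face Can x" "F c 2 \<in> face Can x" "F c 3 \<in> face Can x" "F (\<sigma> c) 0 \<in> face Can x"
    using 1 2 3 s0 by auto
qed

lemma face_reach:
  assumes "b \<in> B" "c \<in> orbit \<sigma> b"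
  shows "F c 0 \<in> face Can (F b 0)"
  using assms(2)
proof induction
  case base
  show ?case using face_step(4)[OF assms(1)] face_def by simp
next
  case (step y)
  have "y \<in> B" using orbit_closed[OF assms(1) step(1)] by blast
  then show ?case using face_step(4)[OF _ step(2)] by blast
qed

lemma t_cases: "t < (4::nat) \<Longrightarrow> t = 0 \<or> t = 1 \<or> t = 2 \<or> t = 3" by auto

lemma Cset_sub_face: assumes "b \<in> B" shows "Cset b \<subseteq> face Can (F b 0)"
proof
  fix x assume "x \<in> Cset b"
  then obtain c t where ct: "c \<in> orbit \<sigma> b" "t < 4" "x = F c t" unfolding Cset_def by blast
  have c: "c \<in> B" using orbit_closed[OF assms ct(1)] by blast
  have "F c 0 \<in> face Can (F b 0)" using face_reach[OF assms ct(1)] .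
  then have "F c 0 \<in> face Can (F b 0) \<and> F c 1 \<in> face Can (F b 0) \<and> F c 2 \<in> face Can (F b 0) \<and> F c 3 \<in> face Can (F b 0)"
    using face_step[OF c] by blast
  then show "x \<in> face Can (F b 0)" using t_cases[OF ct(2)] ct(3) by auto
qed

lemma comp_sub_Cset: assumes "b \<in> B" "t < 4" shows "comp Can (F b t) \<subseteq> Cset b"
  unfolding comp_def
proof (rule orb_closed)
  show "F b t \<in> Cset b" unfolding Cset_def using assms orb_facts(1)[OF assms(1)] by blast
next
  fix u f assume u: "u \<in> Cset b" "u \<in> flags Can" "f \<in> {a0 Can, a1 Can, a2 Can}"
  then obtain c t where ct: "c \<in> orbit \<sigma> b" "t < 4" "u = F c t" unfolding Cset_def by blast
  note oc = orbit_closed[OF assms(1) ct(1)]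
  have m: "\<And>d t. d \<in> orbit \<sigma> b \<Longrightarrow> t < 4 \<Longrightarrow> F d t \<in> Cset b" unfolding Cset_def by blast
  show "f u \<in> Cset b"
    using u(3) t_cases[OF ct(2)] ct Can_simps[OF oc(3)] m[OF ct(1)] m[OF oc(1)] m[OF oc(2)]
    by (elim disjE insertE) auto
qed

lemma invol_Can: "fs \<subseteq> {a0 Can, a1 Can, a2 Can} \<Longrightarrow> invol (flags Can) fs"
  using map_invol[OF Can_is_map] .

lemma face_Can: assumes "b \<in> B" "t < 4" shows "face Can (F b t) = Cset b" "comp Can (F b t) = Cset b"
proof -
  have "F b t \<in> Cset b" unfolding Cset_def using assms orb_facts(1)[OF assms(1)] by blast
  then have "F b t \<in> face Can (F b 0)" using Cset_sub_face[OF assms(1)] by blast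
  moreover have inv: "invol (flags Can) {a0 Can, a1 Can}" by (rule invol_Can) auto
  moreover have F0: "F b 0 \<in> flags Can" by (rule Fin) (use assms in auto)
  ultimately have e: "face Can (F b t) = face Can (F b 0)"
    unfolding face_def using orb_eq by blast
  show "face Can (F b t) = Cset b"
    using e Cset_sub_face[OF assms(1)] comp_sub_Cset[OF assms] face_sub_comp by blast
  then show "comp Can (F b t) = Cset b"
    using comp_sub_Cset[OF assms] face_sub_comp by blast
qed

lemma vertex_step:
  assumes "c \<in> B" "F c 0 \<in> vertex Can x"
  shows "F c 1 \<in> vertex Can x" "F (\<sigma> c) 0 \<in> vertex Can x"
proof -
  note st = orb_step[where D="flags Can" and fs="{a1 Can, a2 Can}", folded vertex_def]
  have sc: "\<sigma> c \<in> B" using sigma_in assms by blast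
  note cs = Can_simps[OF assms(1)] Can_simps[OF sc]
  show "F c 1 \<in> vertex Can x" using st[OF assms(2) Fin[OF assms(1)], of "a2 Can"] cs by simp
  have s1: "F (\<sigma> c) 1 \<in> vertex Can x" using st[OF assms(2) Fin[OF assms(1)], of "a1 Can"] cs by simp
  show "F (\<sigma> c) 0 \<in> vertex Can x" using st[OF s1 Fin[OF sc], of "a2 Can"] cs by simp
qed

lemma vertex_reach:
  assumes "b \<in> B" "c \<in> orbit \<sigma> b"
  shows "F c 0 \<in> vertex Can (F b 0)"
  using assms(2)
proof induction
  case base
  show ?case using vertex_step(2)[OF assms(1)] vertex_def by simp
next
  case (step y)
  have "y \<in> B" using orbit_closed[OF assms(1) step(1)] by blast
  then show ?case using vertex_step(2)[OF _ step(2)] by blast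
qed

lemma vertex_white_Can: assumes "b \<in> B" "t < 2" shows "vertex Can (F b t) = Vset b"
proof -
  have sub1: "Vset b \<subseteq> vertex Can (F b 0)"
  proof
    fix x assume "x \<in> Vset b"
    then obtain c t where ct: "c \<in> orbit \<sigma> b" "t < 2" "x = F c t" unfolding Vset_def by blast
    have c: "c \<in> B" using orbit_closed[OF assms(1) ct(1)] by blast
    have "F c 0 \<in> vertex Can (F b 0)" using vertex_reach[OF assms(1) ct(1)] .
    then show "x \<in> vertex Can (F b 0)" using vertex_step[OF c] ct by (cases t) auto
  qed
  have sub2: "vertex Can (F b t) \<subseteq> Vset b"
    unfolding vertex_def
  proof (rule orb_closed)
    show "F b t \<in> Vset b" unfolding Vset_def using assms orb_facts(1)[OF assms(1)] by blast
  next
    fix u f assume u: "u \<in> Vset b" "u \<in> flags Can" "f \<in> {a1 Can, a2 Can}"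
    then obtain c t where ct: "c \<in> orbit \<sigma> b" "t < 2" "u = F c t" unfolding Vset_def by blast
    note oc = orbit_closed[OF assms(1) ct(1)]
    have m: "\<And>d t. d \<in> orbit \<sigma> b \<Longrightarrow> t < 2 \<Longrightarrow> F d t \<in> Vset b" unfolding Vset_def by blast
    have t: "t = 0 \<or> t = 1" using ct by auto
    show "f u \<in> Vset b"
      using u(3) t ct Can_simps[OF oc(3)] m[OF ct(1)] m[OF oc(1)] m[OF oc(2)]
      by (elim disjE insertE) auto
  qed
  have "F b t \<in> Vset b" unfolding Vset_def using assms orb_facts(1)[OF assms(1)] by blast
  then have "F b t \<in> vertex Can (F b 0)" using sub1 by blast
  moreover have inv: "invol (flags Can) {a1 Can, a2 Can}" by (rule invol_Can) auto
  moreover have F0: "F b 0 \<in> flags Can" by (rule Fin) (use assms in auto)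
  ultimately have e: "vertex Can (F b t) = vertex Can (F b 0)"
    unfolding vertex_def using orb_eq by blast
  show ?thesis using e sub1 sub2 by blast
qed

lemma vertex_black_Can: assumes "b \<in> B" "t = 2 \<or> t = 3" shows "vertex Can (F b t) \<subseteq> {F b 2, F b 3}"
  unfolding vertex_def
proof (rule orb_closed)
  show "F b t \<in> {F b 2, F b 3}" using assms by auto
next
  fix u f assume u: "u \<in> {F b 2, F b 3}" "u \<in> flags Can" "f \<in> {a1 Can, a2 Can}"
  then show "f u \<in> {F b 2, F b 3}" using Can_simps[OF assms(1)] by auto
qed

end


context canon begin

definition mn :: "nat \<times> nat \<Rightarrow> nat \<times> nat" where "mn b = Min (orbit \<sigma> b)"
definition R :: "(nat \<times> nat) set" where "R = {b \<in> B. b = mn b}"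

lemma mn_facts:
  assumes "b \<in> B"
  shows "mn b \<in> orbit \<sigma> b" "mn b \<in> B" "orbit \<sigma> (mn b) = orbit \<sigma> b" "mn (mn b) = mn b"
    "\<And>c. c \<in> orbit \<sigma> b \<Longrightarrow> mn b \<le> c" "mn b \<in> R"
proof -
  have f: "finite (orbit \<sigma> b)" "orbit \<sigma> b \<noteq> {}" using orb_facts(1,5)[OF assms] by auto
  show m: "mn b \<in> orbit \<sigma> b" unfolding mn_def using Min_in[OF f] .
  show mB: "mn b \<in> B" using m orbit_closed[OF assms] by blast
  show o: "orbit \<sigma> (mn b) = orbit \<sigma> b" using orb_facts(6)[OF assms m] .
  have "mn (mn b) = Min (orbit \<sigma> (mn b))" by (simp add: mn_def)
  also have "\<dots> = mn b" using o by (simp add: mn_def)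
  finally show mm: "mn (mn b) = mn b" .
  show "\<And>c. c \<in> orbit \<sigma> b \<Longrightarrow> mn b \<le> c" unfolding mn_def using f by simp
  show "mn b \<in> R" unfolding R_def using mB mm by simp
qed

lemma mn_eq: "b \<in> B \<Longrightarrow> c \<in> orbit \<sigma> b \<Longrightarrow> mn c = mn b"
  unfolding mn_def using orb_facts(6) by simp

lemma Cset_mem: "c \<in> orbit \<sigma> b \<Longrightarrow> t < 4 \<Longrightarrow> F c t \<in> Cset b"
  unfolding Cset_def by blast
lemma Vset_mem: "c \<in> orbit \<sigma> b \<Longrightarrow> t < 2 \<Longrightarrow> F c t \<in> Vset b"
  unfolding Vset_def by blast
lemma root_mem: "c \<in> B \<Longrightarrow> c = mn c \<Longrightarrow> F c 0 \<in> root Can"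
  unfolding Can_root mn_def by blast

lemma R_sub: "R \<subseteq> B" unfolding R_def by auto

lemma F_in_Cset: "F c t \<in> Cset b \<Longrightarrow> b \<in> B \<Longrightarrow> t < 4 \<Longrightarrow> c \<in> B \<Longrightarrow> c \<in> orbit \<sigma> b"
proof -
  assume a: "F c t \<in> Cset b" "b \<in> B" "t < 4" "c \<in> B"
  then obtain d t' where "d \<in> orbit \<sigma> b" "t' < 4" "F c t = F d t'" unfolding Cset_def by blast
  then show ?thesis using F_inj[of c d t t'] a orbit_closed[OF a(2)] by auto
qed

lemma F_in_Vset: "F c t \<in> Vset b \<Longrightarrow> b \<in> B \<Longrightarrow> t < 4 \<Longrightarrow> c \<in> B \<Longrightarrow> c \<in> orbit \<sigma> b"
proof -
  assume a: "F c t \<in> Vset b" "b \<in> B" "t < 4" "c \<in> B"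
  then obtain d t' where "d \<in> orbit \<sigma> b" "t' < 2" "F c t = F d t'" unfolding Vset_def by blast
  then show ?thesis using F_inj[of c d t t'] a orbit_closed[OF a(2)] by auto
qed

lemma edge_Can: assumes "b \<in> B" "t < 4" shows "edge Can (F b t) = {F b 0, F b 1, F b 2, F b 3}"
  using edge_explicit[OF Can_is_map Fin[OF assms]] Can_simps[OF assms(1)] t_cases[OF assms(2)]
  by (elim disjE) auto

lemma edges_Can: "card (edges Can) = card B"
proof -
  have e: "edges Can = (\<lambda>b. {F b 0, F b 1, F b 2, F b 3}) ` B"
  proof
    show "edges Can \<subseteq> (\<lambda>b. {F b 0, F b 1, F b 2, F b 3}) ` B"
      unfolding edges_def using edge_Can flag_cases by (smt (verit) image_iff subsetI)
    show "(\<lambda>b. {F b 0, F b 1, F b 2, F b 3}) ` B \<subseteq> edges Can"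
      unfolding edges_def using edge_Can Fin by (smt (verit) image_iff subsetI zero_less_numeral)
  qed
  have "inj_on (\<lambda>b. {F b 0, F b 1, F b 2, F b 3}) B"
  proof (rule inj_onI)
    fix b c assume "b \<in> B" "c \<in> B" "{F b 0, F b 1, F b 2, F b 3} = {F c 0, F c 1, F c 2, F c 3}"
    then have "F b 0 \<in> {F c 0, F c 1, F c 2, F c 3}" by blast
    then show "b = c" using F_inj \<open>b \<in> B\<close> \<open>c \<in> B\<close> by auto
  qed
  then show ?thesis unfolding e by (rule card_image)
qed

lemma Can_rooted: "is_rooted Can"
  unfolding is_rooted_def
proof (intro conjI ballI)
  show "root Can \<subseteq> flags Can" unfolding Can_root using Fin by auto
next
  fix r assume "r \<in> root Can" then show "white Can r" unfolding Can_root using Can_simps by auto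
next
  fix x assume x: "x \<in> flags Can"
  obtain b t where bt: "b \<in> B" "t < 4" "x = F b t" using flag_cases[OF x] by blast
  note mf = mn_facts[OF bt(1)]
  have ex: "F (mn b) 0 \<in> root Can \<and> F (mn b) 0 \<in> comp Can x"
    using mf root_mem Cset_mem face_Can(2)[OF bt(1,2)] bt(3) by simp
  show "\<exists>!r. r \<in> root Can \<and> r \<in> comp Can x"
  proof (rule ex1I[where a="F (mn b) 0" and P="\<lambda>r. r \<in> root Can \<and> r \<in> comp Can x", OF ex])
    fix r assume r: "r \<in> root Can \<and> r \<in> comp Can x"
    then obtain c where c: "c \<in> B" "c = mn c" "r = F c 0" unfolding Can_root mn_def by auto
    have "c \<in> orbit \<sigma> b" using F_in_Cset[of c 0 b] r c bt face_Can(2)[OF bt(1,2)] by auto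
    then have "mn c = mn b" using mn_eq bt by blast
    then show "r = F (mn b) 0" using c by simp
  qed
qed

lemma orbit_col:
  assumes col: "\<forall>b\<in>B. snd (\<sigma> b) = snd b" and b: "b \<in> B" and c: "c \<in> orbit \<sigma> b"
  shows "snd c = snd b"
  using c
proof induction
  case base then show ?case using col b by simp
next
  case (step y) then show ?case using col orbit_closed[OF b step(1)] by simp
qed

lemma Can_decorated:
  assumes col: "\<forall>b\<in>B. snd (\<sigma> b) = snd b" and Bl: "B = boxes lam"
  shows "is_decorated lam Can"
  unfolding is_decorated_def
proof (intro conjI)
  show "\<forall>x\<in>flags Can. dec Can x \<in> boxes lam \<and> dec Can (a0 Can x) = dec Can x \<and> dec Can (a2 Can x) = dec Can x"
  proof
    fix x assume x: "x \<in> flags Can"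
    obtain b t where bt: "b \<in> B" "t < 4" "x = F b t" using flag_cases[OF x] by blast
    show "dec Can x \<in> boxes lam \<and> dec Can (a0 Can x) = dec Can x \<and> dec Can (a2 Can x) = dec Can x"
      using t_cases[OF bt(2)] bt Can_simps[OF bt(1)] Bl by (elim disjE) auto
  qed
  show "\<forall>x\<in>flags Can. \<forall>y\<in>flags Can. dec Can x = dec Can y \<longrightarrow> y \<in> edge Can x"
  proof (intro ballI impI)
    fix x y assume x: "x \<in> flags Can" and y: "y \<in> flags Can" and d: "dec Can x = dec Can y"
    obtain b t where bt: "b \<in> B" "t < 4" "x = F b t" using flag_cases[OF x] by blast
    obtain c t' where ct: "c \<in> B" "t' < 4" "y = F c t'" using flag_cases[OF y] by blast
    have "b = c" using d bt ct Can_simps by auto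
    then show "y \<in> edge Can x" using edge_Can[OF bt(1,2)] bt ct t_cases[OF ct(2)] by auto
  qed
  show "\<forall>x\<in>flags Can. \<forall>y\<in>vertex Can x. if white Can x then snd (dec Can y) = snd (dec Can x) else fst (dec Can y) = fst (dec Can x)"
  proof (intro ballI)
    fix x y assume x: "x \<in> flags Can" and y: "y \<in> vertex Can x"
    obtain b t where bt: "b \<in> B" "t < 4" "x = F b t" using flag_cases[OF x] by blast
    show "if white Can x then snd (dec Can y) = snd (dec Can x) else fst (dec Can y) = fst (dec Can x)"
    proof (cases "t < 2")
      case True
      then have "y \<in> Vset b" using vertex_white_Can[OF bt(1) True] y bt by simp
      then obtain c t' where ct: "c \<in> orbit \<sigma> b" "t' < 2" "y = F c t'" unfolding Vset_def by blast
      have "snd c = snd b" using orbit_col[OF col bt(1) ct(1)] .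
      then show ?thesis using True bt ct Can_simps[OF bt(1)] Can_simps[OF orbit_closed(3)[OF bt(1) ct(1)]] by auto
    next
      case False
      then have "t = 2 \<or> t = 3" using bt by auto
      then have "y \<in> {F b 2, F b 3}" using vertex_black_Can[OF bt(1)] y bt by blast
      then show ?thesis using bt Can_simps[OF bt(1)] by auto
    qed
  qed
qed

lemma Can_rooted_dec: "rooted_dec Can"
  unfolding rooted_dec_def
proof (intro ballI)
  fix r y assume r: "r \<in> root Can" and y: "y \<in> comp Can r"
  then obtain c where c: "c \<in> B" "c = mn c" "r = F c 0" unfolding Can_root mn_def by auto
  have "y \<in> Cset c" using y face_Can(2)[OF c(1), of 0] c by simp
  then obtain d t where dt: "d \<in> orbit \<sigma> c" "t < 4" "y = F d t" unfolding Cset_def by blast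
  have "mn c \<le> d" using mn_facts(5)[OF c(1) dt(1)] .
  then show "lex_le (dec Can r) (dec Can y)"
    using c dt Can_simps[OF c(1)] Can_simps[OF orbit_closed(3)[OF c(1) dt(1)]] lex_le_iff by auto
qed

lemma Can_IDrep:
  assumes col: "\<forall>b\<in>B. snd (\<sigma> b) = snd b" and Bl: "B = boxes lam"
  shows "Can \<in> IDrep (card B) lam"
  unfolding IDrep_def using Can_flags edges_Can Can_is_map Can_bip Can_rooted Can_decorated[OF assms]
    Can_rooted_dec by auto

lemma white_vertices_Can: "{vertex Can x | x. x \<in> flags Can \<and> white Can x} = Vset ` R"
proof (intro set_eqI iffI)
  fix A assume "A \<in> {vertex Can x | x. x \<in> flags Can \<and> white Can x}"
  then obtain x where x: "x \<in> flags Can" "white Can x" "A = vertex Can x" by blast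
  obtain b t where bt: "b \<in> B" "t < 4" "x = F b t" using flag_cases[OF x(1)] by blast
  have t: "t < 2" using x bt Can_simps by auto
  have "A = Vset b" using vertex_white_Can[OF bt(1) t] x bt by simp
  also have "\<dots> = Vset (mn b)" unfolding Vset_def using mn_facts(3)[OF bt(1)] by simp
  finally show "A \<in> Vset ` R" using mn_facts(6)[OF bt(1)] by blast
next
  fix A assume "A \<in> Vset ` R"
  then obtain b where b: "b \<in> R" "A = Vset b" by blast
  have bB: "b \<in> B" using b R_sub by blast
  have "A = vertex Can (F b 0)" using vertex_white_Can[OF bB, of 0] b by simp
  then show "A \<in> {vertex Can x | x. x \<in> flags Can \<and> white Can x}"
    using Fin[OF bB, of 0] Can_simps[OF bB] by auto
qed

lemma comps_Can: "{comp Can x | x. x \<in> flags Can} = Cset ` R"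
  and faces_Can: "{face Can x | x. x \<in> flags Can} = Cset ` R"
proof -
  have "{comp Can x | x. x \<in> flags Can} = Cset ` R \<and> {face Can x | x. x \<in> flags Can} = Cset ` R"
  proof (intro conjI set_eqI iffI)
    fix A assume "A \<in> {comp Can x | x. x \<in> flags Can}"
    then obtain x where x: "x \<in> flags Can" "A = comp Can x" by blast
    obtain b t where bt: "b \<in> B" "t < 4" "x = F b t" using flag_cases[OF x(1)] by blast
    have "A = Cset b" using face_Can[OF bt(1,2)] x bt by simp
    also have "\<dots> = Cset (mn b)" unfolding Cset_def using mn_facts(3)[OF bt(1)] by simp
    finally show "A \<in> Cset ` R" using mn_facts(6)[OF bt(1)] by blast
  next
    fix A assume "A \<in> {face Can x | x. x \<in> flags Can}"
    then obtain x where x: "x \<in> flags Can" "A = face Can x" by blast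
    obtain b t where bt: "b \<in> B" "t < 4" "x = F b t" using flag_cases[OF x(1)] by blast
    have "A = Cset b" using face_Can[OF bt(1,2)] x bt by simp
    also have "\<dots> = Cset (mn b)" unfolding Cset_def using mn_facts(3)[OF bt(1)] by simp
    finally show "A \<in> Cset ` R" using mn_facts(6)[OF bt(1)] by blast
  next
    fix A assume "A \<in> Cset ` R"
    then obtain b where b: "b \<in> R" "A = Cset b" by blast
    have bB: "b \<in> B" using b R_sub by blast
    show "A \<in> {comp Can x | x. x \<in> flags Can}" using face_Can(2)[OF bB, of 0] b Fin[OF bB, of 0] by auto
  next
    fix A assume "A \<in> Cset ` R"
    then obtain b where b: "b \<in> R" "A = Cset b" by blast
    have bB: "b \<in> B" using b R_sub by blast
    show "A \<in> {face Can x | x. x \<in> flags Can}" using face_Can(1)[OF bB, of 0] b Fin[OF bB, of 0] by auto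
  qed
  then show "{comp Can x | x. x \<in> flags Can} = Cset ` R" "{face Can x | x. x \<in> flags Can} = Cset ` R"
    by auto
qed

lemma R_orbit_eq: "b \<in> R \<Longrightarrow> c \<in> R \<Longrightarrow> orbit \<sigma> b = orbit \<sigma> c \<Longrightarrow> b = c"
  unfolding R_def mn_def by auto

lemma inj_Vset: "inj_on Vset R"
proof (rule inj_onI)
  fix b c assume bc: "b \<in> R" "c \<in> R" "Vset b = Vset c"
  have B: "b \<in> B" "c \<in> B" using bc R_sub by auto
  have "F b 0 \<in> Vset b" using Vset_mem orb_facts(1)[OF B(1)] by simp
  then have "F b 0 \<in> Vset c" using bc(3) by simp
  then have "b \<in> orbit \<sigma> c" using F_in_Vset B by auto
  then have "orbit \<sigma> b = orbit \<sigma> c" using orb_facts(6) B by blast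
  then show "b = c" using R_orbit_eq bc by blast
qed

lemma inj_Cset: "inj_on Cset R"
proof (rule inj_onI)
  fix b c assume bc: "b \<in> R" "c \<in> R" "Cset b = Cset c"
  have B: "b \<in> B" "c \<in> B" using bc R_sub by auto
  have "F b 0 \<in> Cset b" using Cset_mem orb_facts(1)[OF B(1)] by simp
  then have "F b 0 \<in> Cset c" using bc(3) by simp
  then have "b \<in> orbit \<sigma> c" using F_in_Cset B by auto
  then have "orbit \<sigma> b = orbit \<sigma> c" using orb_facts(6) B by blast
  then show "b = c" using R_orbit_eq bc by blast
qed

lemma card_Cset: assumes "b \<in> B" shows "card (Cset b) = 4 * card (orbit \<sigma> b)"
proof -
  have e: "Cset b = (\<lambda>(c, t). F c t) ` (orbit \<sigma> b \<times> {0..<4})" unfolding Cset_def by force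
  have "inj_on (\<lambda>(c, t). F c t) (orbit \<sigma> b \<times> {0..<4})"
    using F_inj orbit_closed(3)[OF assms] by (auto intro!: inj_onI)
  then have "card (Cset b) = card (orbit \<sigma> b \<times> {0..<4::nat})" unfolding e by (rule card_image)
  then show ?thesis by (simp add: card_cartesian_product)
qed

lemma nwhite_Can: "nwhite Can = card R"
  unfolding nwhite_def white_vertices_Can using card_image[OF inj_Vset] .

lemma ncc_Can: "ncc Can = card R"
  unfolding ncc_def comps_Can using card_image[OF inj_Cset] .

lemma ptype_Can: "ptype p Can = (\<Prod>b\<in>R. p (card (orbit \<sigma> b)))"
  unfolding ptype_def faces_Can prod.reindex[OF inj_Cset]
  using card_Cset R_sub by (intro prod.cong) auto

end


locale bmap =
  fixes M :: dmap and lam :: "nat list"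
  assumes map: "is_map M" and bip: "is_bipartite M" and rooted: "is_rooted M"
    and decor: "is_decorated lam M" and rdec: "rooted_dec M"
    and cardE: "card (edges M) = card (boxes lam)" and finB: "finite (boxes lam)"
begin

lemmas mf = map_facts[OF map]

lemma finF: "finite (flags M)" using map unfolding is_map_def by simp

lemma wh: "x \<in> flags M \<Longrightarrow> white M (a1 M x) = white M x" "x \<in> flags M \<Longrightarrow> white M (a2 M x) = white M x"
  "x \<in> flags M \<Longrightarrow> white M (a0 M x) \<longleftrightarrow> \<not> white M x"
  using bip unfolding is_bipartite_def by auto

lemma inv_v: "invol (flags M) {a1 M, a2 M}" by (rule map_invol[OF map]) auto
lemma inv_e: "invol (flags M) {a0 M, a2 M}" by (rule map_invol[OF map]) auto
lemma inv_c: "invol (flags M) {a0 M, a1 M, a2 M}" by (rule map_invol[OF map]) auto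

lemma vertex_eq: "x \<in> flags M \<Longrightarrow> y \<in> vertex M x \<Longrightarrow> vertex M y = vertex M x"
  unfolding vertex_def by (rule orb_eq[OF inv_v])
lemma edge_eq: "x \<in> flags M \<Longrightarrow> y \<in> edge M x \<Longrightarrow> edge M y = edge M x"
  unfolding edge_def by (rule orb_eq[OF inv_e])
lemma comp_eq: "x \<in> flags M \<Longrightarrow> y \<in> comp M x \<Longrightarrow> comp M y = comp M x"
  unfolding comp_def by (rule orb_eq[OF inv_c])

lemmas sub = map_orb_sub[OF map]

lemma comp_step: "x \<in> flags M \<Longrightarrow> y \<in> comp M x \<Longrightarrow> a0 M y \<in> comp M x \<and> a1 M y \<in> comp M x \<and> a2 M y \<in> comp M x"
  using orb_step[of y "flags M" "{a0 M, a1 M, a2 M}" x] sub(4) unfolding comp_def by blast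

lemma vertex_step: "x \<in> flags M \<Longrightarrow> y \<in> vertex M x \<Longrightarrow> a1 M y \<in> vertex M x \<and> a2 M y \<in> vertex M x"
  using orb_step[of y "flags M" "{a1 M, a2 M}" x] sub(1) unfolding vertex_def by blast

lemma self_comp: "x \<in> comp M x" unfolding comp_def by simp
lemma self_vertex: "x \<in> vertex M x" unfolding vertex_def by simp

lemma comp_same: "x \<in> flags M \<Longrightarrow> y \<in> flags M \<Longrightarrow> y \<in> comp M x \<Longrightarrow> x \<in> comp M y"
  using comp_eq self_comp by blast

lemma dec_edge: "x \<in> flags M \<Longrightarrow> y \<in> edge M x \<Longrightarrow> dec M y = dec M x"
proof -
  assume x: "x \<in> flags M" and y: "y \<in> edge M x"
  have "edge M x \<subseteq> {y. dec M y = dec M x}"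
    unfolding edge_def
  proof (rule orb_closed)
    fix u f assume "u \<in> {y. dec M y = dec M x}" "u \<in> flags M" "f \<in> {a0 M, a2 M}"
    then show "f u \<in> {y. dec M y = dec M x}" using decor unfolding is_decorated_def by auto
  qed simp
  then show ?thesis using y by blast
qed

lemma dec_in: "x \<in> flags M \<Longrightarrow> dec M x \<in> boxes lam"
  using decor unfolding is_decorated_def by auto

lemma dec_inj: "x \<in> flags M \<Longrightarrow> y \<in> flags M \<Longrightarrow> dec M x = dec M y \<Longrightarrow> y \<in> edge M x"
  using decor unfolding is_decorated_def by auto

lemma dec_a0: "x \<in> flags M \<Longrightarrow> dec M (a0 M x) = dec M x"
  and dec_a2: "x \<in> flags M \<Longrightarrow> dec M (a2 M x) = dec M x"
  using decor unfolding is_decorated_def by auto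

lemma vertex_dec: "x \<in> flags M \<Longrightarrow> y \<in> vertex M x \<Longrightarrow>
   (if white M x then snd (dec M y) = snd (dec M x) else fst (dec M y) = fst (dec M x))"
  using decor unfolding is_decorated_def by blast

lemma dec_surj: "dec M ` flags M = boxes lam"
proof -
  let ?g = "\<lambda>E. dec M (SOME x. x \<in> E)"
  have g: "\<And>x. x \<in> flags M \<Longrightarrow> ?g (edge M x) = dec M x"
  proof -
    fix x assume x: "x \<in> flags M"
    have "(SOME y. y \<in> edge M x) \<in> edge M x" by (rule someI[of _ x]) (simp add: edge_def)
    then show "?g (edge M x) = dec M x" using dec_edge[OF x] by blast
  qed
  have im: "?g ` edges M = dec M ` flags M" unfolding edges_def using g by (auto simp: image_iff)
  have "inj_on ?g (edges M)"
  proof (rule inj_onI)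
    fix E E' assume "E \<in> edges M" "E' \<in> edges M" "?g E = ?g E'"
    then obtain x y where xy: "x \<in> flags M" "y \<in> flags M" "E = edge M x" "E' = edge M y" "dec M x = dec M y"
      unfolding edges_def using g by auto
    then have "y \<in> edge M x" using dec_inj by blast
    then have "edge M y = edge M x" by (rule edge_eq[OF xy(1)])
    then show "E = E'" using xy by simp
  qed
  then have "card (dec M ` flags M) = card (boxes lam)" using card_image im cardE by metis
  moreover have "dec M ` flags M \<subseteq> boxes lam" using dec_in by blast
  ultimately show ?thesis using card_subset_eq finB by blast
qed

definition rt :: "nat \<Rightarrow> nat" where "rt x = (THE r. r \<in> root M \<and> r \<in> comp M x)"

lemma rt_facts:
  assumes x: "x \<in> flags M"
  shows "rt x \<in> root M" "rt x \<in> comp M x" "rt x \<in> flags M" "white M (rt x)"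
    "comp M (rt x) = comp M x" "\<And>r. r \<in> root M \<Longrightarrow> r \<in> comp M x \<Longrightarrow> r = rt x"
proof -
  have ex: "\<exists>!r. r \<in> root M \<and> r \<in> comp M x" using rooted x unfolding is_rooted_def by blast
  then have t: "rt x \<in> root M \<and> rt x \<in> comp M x" unfolding rt_def by (rule theI')
  then show "rt x \<in> root M" "rt x \<in> comp M x" by auto
  show "rt x \<in> flags M" using t rooted unfolding is_rooted_def by blast
  show "white M (rt x)" using t rooted unfolding is_rooted_def by blast
  show "comp M (rt x) = comp M x" using comp_eq[OF x] t by blast
  show "\<And>r. r \<in> root M \<Longrightarrow> r \<in> comp M x \<Longrightarrow> r = rt x" using ex t by blast
qed

lemma rt_eq: "x \<in> flags M \<Longrightarrow> y \<in> comp M x \<Longrightarrow> rt y = rt x"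
proof -
  assume x: "x \<in> flags M" and y: "y \<in> comp M x"
  have yf: "y \<in> flags M" using y sub(4)[OF x] by blast
  have e: "comp M y = comp M x" by (rule comp_eq[OF x y])
  have "rt y \<in> root M" "rt y \<in> comp M x" using rt_facts(1,2)[OF yf] e by auto
  then show ?thesis using rt_facts(6)[OF x] by blast
qed

definition WV :: "nat set set" where "WV = {vertex M x | x. x \<in> flags M \<and> white M x}"
definition CC :: "nat set set" where "CC = {comp M x | x. x \<in> flags M}"
definition gv :: "nat set \<Rightarrow> nat set" where "gv V = comp M (SOME z. z \<in> V)"

lemma gv_vertex: "x \<in> flags M \<Longrightarrow> gv (vertex M x) = comp M x"
proof -
  assume x: "x \<in> flags M"
  have "(SOME z. z \<in> vertex M x) \<in> vertex M x" by (rule someI[of _ x]) (rule self_vertex)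
  then have "(SOME z. z \<in> vertex M x) \<in> comp M x" using vertex_sub_comp by blast
  then show ?thesis unfolding gv_def using comp_eq[OF x] by blast
qed

lemma gv_image: "gv ` WV = CC"
proof
  show "gv ` WV \<subseteq> CC" unfolding WV_def CC_def using gv_vertex by auto
  show "CC \<subseteq> gv ` WV"
  proof
    fix C assume "C \<in> CC"
    then obtain x where x: "x \<in> flags M" "C = comp M x" unfolding CC_def by blast
    have "C = gv (vertex M (rt x))" using gv_vertex[OF rt_facts(3)[OF x(1)]] rt_facts(5)[OF x(1)] x by simp
    moreover have "vertex M (rt x) \<in> WV" unfolding WV_def using rt_facts[OF x(1)] by blast
    ultimately show "C \<in> gv ` WV" by blast
  qed
qed

lemma finWV: "finite WV"
proof -
  have "WV \<subseteq> vertex M ` flags M" unfolding WV_def by blast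
  then show ?thesis using finF finite_subset by blast
qed

lemma ncc_le: "ncc M \<le> nwhite M"
proof -
  have "ncc M = card (gv ` WV)" unfolding ncc_def gv_image CC_def ..
  also have "\<dots> \<le> card WV" by (rule card_image_le[OF finWV])
  finally show ?thesis unfolding nwhite_def WV_def .
qed

lemma contr_same_vertex:
  assumes c: "nwhite M = ncc M" and x: "x \<in> flags M" "white M x" and y: "y \<in> comp M x" "white M y"
  shows "y \<in> vertex M x"
proof -
  have "card (gv ` WV) = card CC" using gv_image by simp
  also have "\<dots> = card WV" using c unfolding ncc_def nwhite_def CC_def WV_def by simp
  finally have "card (gv ` WV) = card WV" .
  then have inj: "inj_on gv WV" using eq_card_imp_inj_on[OF finWV] by blast
  have yf: "y \<in> flags M" using y sub(4)[OF x(1)] by blast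
  have "gv (vertex M x) = gv (vertex M y)" using gv_vertex x yf comp_eq[OF x(1) y(1)] by simp
  moreover have "vertex M x \<in> WV" "vertex M y \<in> WV" unfolding WV_def using x yf y by auto
  ultimately have "vertex M y = vertex M x" using inj unfolding inj_on_def by metis
  then show ?thesis using self_vertex by blast
qed

end

locale cmap = bmap +
  assumes contr: "nwhite M = ncc M"
begin

lemma same_vertex: "x \<in> flags M \<Longrightarrow> white M x \<Longrightarrow> y \<in> comp M x \<Longrightarrow> white M y \<Longrightarrow> y \<in> vertex M x"
  using contr_same_vertex[OF contr] by blast

lemma leaf: assumes y: "y \<in> flags M" "\<not> white M y" shows "a1 M y = a2 M y"
proof -
  let ?z = "a1 M y"
  have zf: "?z \<in> flags M" using mf(2)[OF y(1)] .
  have zv: "?z \<in> vertex M y" using vertex_step[OF y(1) self_vertex] by blast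
  have row: "fst (dec M ?z) = fst (dec M y)" using vertex_dec[OF y(1) zv] y by simp
  have w: "white M (a0 M y)" "white M (a0 M ?z)" using wh y zf wh(1)[OF y(1)] by auto
  have c1: "a0 M y \<in> comp M y" using comp_step[OF y(1) self_comp] by blast
  have "?z \<in> comp M y" using zv vertex_sub_comp by blast
  then have c2: "a0 M ?z \<in> comp M y" using comp_step[OF y(1)] by blast
  have a0yf: "a0 M y \<in> flags M" using mf(1)[OF y(1)] .
  have "a0 M ?z \<in> comp M (a0 M y)" using c2 comp_eq[OF y(1) c1] by simp
  then have "a0 M ?z \<in> vertex M (a0 M y)" using same_vertex[OF a0yf w(1) _ w(2)] by blast
  then have "snd (dec M (a0 M ?z)) = snd (dec M (a0 M y))" using vertex_dec[OF a0yf] w(1) by auto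
  then have col: "snd (dec M ?z) = snd (dec M y)" using dec_a0 zf y(1) by simp
  have "dec M ?z = dec M y" using row col by (simp add: prod_eq_iff)
  then have "?z \<in> edge M y" using dec_inj[OF y(1) zf] by simp
  then have "?z \<in> {y, a0 M y, a2 M y, a0 M (a2 M y)}" using edge_explicit[OF map y(1)] by simp
  moreover have "?z \<noteq> y" using mf(8)[OF y(1)] .
  moreover have "white M ?z = white M y" using wh(1)[OF y(1)] .
  moreover have "white M (a0 M y)" "white M (a0 M (a2 M y))" using w(1) wh y mf(3)[OF y(1)] by auto
  ultimately show ?thesis using y(2) by auto
qed

end


context cmap begin

definition rho :: "nat \<Rightarrow> nat" where "rho x = a2 M (a1 M x)"

definition WF :: "nat set" where "WF = {x \<in> flags M. white M x}"

lemma WF_iff: "x \<in> WF \<longleftrightarrow> x \<in> flags M \<and> white M x" unfolding WF_def by simp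

lemma rho_WF: "x \<in> WF \<Longrightarrow> rho x \<in> WF"
  unfolding WF_iff rho_def using mf wh by auto

lemma rho_vertex: "x \<in> WF \<Longrightarrow> rho x \<in> vertex M x"
  unfolding rho_def WF_iff using vertex_step self_vertex by blast

lemma rho_inj: "x \<in> WF \<Longrightarrow> y \<in> WF \<Longrightarrow> rho x = rho y \<Longrightarrow> x = y"
  unfolding rho_def WF_iff by (metis mf(2,5,6))

lemma rho_inv: "x \<in> WF \<Longrightarrow> a1 M (a2 M (rho x)) = x"
  unfolding rho_def WF_iff using mf by auto

lemma a1a2_WF: "x \<in> WF \<Longrightarrow> a1 M (a2 M x) \<in> WF"
  unfolding WF_iff using mf wh by auto

lemma rho_a1a2: "x \<in> WF \<Longrightarrow> rho (a1 M (a2 M x)) = x"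
  unfolding rho_def WF_iff using mf by auto

lemma rhop_WF: "x \<in> WF \<Longrightarrow> (rho ^^ k) x \<in> WF"
  by (induction k) (auto simp: rho_WF)

lemma rhop_vertex: "x \<in> WF \<Longrightarrow> (rho ^^ k) x \<in> vertex M x"
proof (induction k)
  case 0 then show ?case using self_vertex by simp
next
  case (Suc k)
  have w: "(rho ^^ k) x \<in> WF" using rhop_WF Suc by blast
  have xf: "x \<in> flags M" using Suc WF_iff by blast
  have "rho ((rho ^^ k) x) \<in> vertex M ((rho ^^ k) x)" using rho_vertex[OF w] .
  also have "vertex M ((rho ^^ k) x) = vertex M x" using vertex_eq[OF xf] Suc by blast
  finally show ?case by simp
qed

lemma rhop_comp: "x \<in> WF \<Longrightarrow> (rho ^^ k) x \<in> comp M x"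
  using rhop_vertex vertex_sub_comp by blast

lemma rhop_cancel: "x \<in> WF \<Longrightarrow> (rho ^^ (i + d)) x = (rho ^^ i) x \<Longrightarrow> (rho ^^ d) x = x"
proof (induction i)
  case 0 then show ?case by simp
next
  case (Suc i)
  have "rho ((rho ^^ (i + d)) x) = rho ((rho ^^ i) x)" using Suc(3) by simp
  then have "(rho ^^ (i + d)) x = (rho ^^ i) x" using rho_inj rhop_WF Suc(2) by blast
  then show ?case using Suc by blast
qed

lemma period_ex: assumes "x \<in> WF" shows "\<exists>p>0. (rho ^^ p) x = x"
proof (rule ccontr)
  assume nx: "\<not> (\<exists>p>0. (rho ^^ p) x = x)"
  have "inj_on (\<lambda>k. (rho ^^ k) x) {0..card (flags M)}"
  proof (rule inj_onI)
    fix i j assume "(rho ^^ i) x = (rho ^^ j) x" "i \<in> {0..card (flags M)}" "j \<in> {0..card (flags M)}"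
    show "i = j"
    proof (rule ccontr)
      assume "i \<noteq> j"
      then consider "i < j" | "j < i" by linarith
      then show False
      proof cases
        case 1
        then have "(rho ^^ (i + (j - i))) x = (rho ^^ i) x" using \<open>(rho ^^ i) x = (rho ^^ j) x\<close> by simp
        then have "(rho ^^ (j - i)) x = x" using rhop_cancel assms by blast
        moreover have "j - i > 0" using 1 by simp
        ultimately show False using nx by blast
      next
        case 2
        then have "(rho ^^ (j + (i - j))) x = (rho ^^ j) x" using \<open>(rho ^^ i) x = (rho ^^ j) x\<close> by simp
        then have "(rho ^^ (i - j)) x = x" using rhop_cancel assms by blast
        moreover have "i - j > 0" using 2 by simp
        ultimately show False using nx by blast
      qed
    qed
  qed
  moreover have "(\<lambda>k. (rho ^^ k) x) ` {0..card (flags M)} \<subseteq> flags M" using rhop_WF assms WF_iff by blast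
  ultimately have "card {0..card (flags M)} \<le> card (flags M)" using card_inj_on_le finF by blast
  then show False by simp
qed

definition per :: "nat \<Rightarrow> nat" where "per x = (SOME p. p > 0 \<and> (rho ^^ p) x = x)"

lemma per: "x \<in> WF \<Longrightarrow> per x > 0 \<and> (rho ^^ per x) x = x"
proof -
  assume "x \<in> WF"
  then have "\<exists>p. p > 0 \<and> (rho ^^ p) x = x" using period_ex by blast
  then show ?thesis unfolding per_def by (rule someI_ex)
qed

lemma fp_add: "(rho ^^ (a + b)) x = (rho ^^ a) ((rho ^^ b) x)" by (simp add: funpow_add)

lemma rhop_mult: "(rho ^^ p) x = x \<Longrightarrow> (rho ^^ (p * q + r)) x = (rho ^^ r) x"
proof (induction q)
  case 0 then show ?case by simp
next
  case (Suc q)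
  have e: "p * Suc q + r = (p * q + r) + p" by simp
  have "(rho ^^ (p * Suc q + r)) x = (rho ^^ (p * q + r)) ((rho ^^ p) x)"
    unfolding e by (rule fp_add)
  then show ?case using Suc by simp
qed

lemma rhop_period_shift: assumes "(rho ^^ p) x = x" shows "(rho ^^ p) ((rho ^^ k) x) = (rho ^^ k) x"
proof -
  have "(rho ^^ p) ((rho ^^ k) x) = (rho ^^ k) ((rho ^^ p) x)"
    by (metis fp_add add.commute)
  then show ?thesis using assms by simp
qed

lemma inv_pow:
  assumes w: "w \<in> WF" and p: "p > 0" "(rho ^^ p) w = w"
  shows "a1 M (a2 M w) = (rho ^^ (p - 1)) w"
proof -
  have "rho ((rho ^^ (p - 1)) w) = (rho ^^ p) w" using p(1)
    by (metis Suc_diff_1 funpow.simps(2) o_apply)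
  also have "\<dots> = rho (a1 M (a2 M w))" using p(2) rho_a1a2[OF w] by simp
  finally show ?thesis using rho_inj[OF rhop_WF[OF w] a1a2_WF[OF w]] by metis
qed

definition Ob :: "nat \<Rightarrow> nat set" where "Ob x = {(rho ^^ k) x | k. True}"

lemma Ob_self: "x \<in> Ob x" unfolding Ob_def by (auto intro: exI[of _ 0])

lemma Ob_WF: "x \<in> WF \<Longrightarrow> Ob x \<subseteq> WF" unfolding Ob_def using rhop_WF by blast

lemma Ob_rho: "y \<in> Ob x \<Longrightarrow> rho y \<in> Ob x"
  unfolding Ob_def by (auto intro: exI[of _ "Suc k" for k])

lemma Ob_pow: "y \<in> Ob x \<Longrightarrow> (rho ^^ k) y \<in> Ob x"
  by (induction k) (auto simp: Ob_rho)

lemma Ob_eq: assumes x: "x \<in> WF" and y: "y \<in> Ob x" shows "Ob y = Ob x"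
proof
  show "Ob y \<subseteq> Ob x" using Ob_pow y unfolding Ob_def[of y] by blast
  obtain k where k: "y = (rho ^^ k) x" using y unfolding Ob_def by blast
  obtain p where p: "p > 0" "(rho ^^ p) x = x" using per[OF x] by blast
  have "(rho ^^ ((p - 1) * k)) y = (rho ^^ ((p - 1) * k + k)) x" using k by (simp add: funpow_add)
  also have "(p - 1) * k + k = p * k + 0" using p(1) by (simp add: algebra_simps)
  also have "(rho ^^ (p * k + 0)) x = x" using rhop_mult[OF p(2), of k 0] by simp
  finally have "x \<in> Ob y" unfolding Ob_def by blast
  then show "Ob x \<subseteq> Ob y" using Ob_pow unfolding Ob_def[of x] by blast
qed

lemma dihedral: assumes y: "y \<in> WF" shows "a2 M y \<notin> Ob y"
proof
  assume "a2 M y \<in> Ob y"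
  then obtain m where m: "a2 M y = (rho ^^ m) y" unfolding Ob_def by blast
  obtain p where p: "p > 0" "(rho ^^ p) y = y" using per[OF y] by blast
  have A: "a2 M ((rho ^^ i) y) = (rho ^^ (m + (p - 1) * i)) y" for i
  proof (induction i)
    case 0 then show ?case using m by simp
  next
    case (Suc i)
    let ?z = "(rho ^^ i) y"
    have z: "?z \<in> WF" using rhop_WF[OF y] .
    have a1z: "a1 M ?z \<in> flags M" using z WF_iff mf by blast
    have "a2 M ((rho ^^ Suc i) y) = a2 M (rho ?z)" by simp
    also have "\<dots> = a1 M ?z" by (simp only: rho_def[of ?z] mf(6)[OF a1z])
    also have "\<dots> = a1 M (a2 M (a2 M ?z))" using z mf WF_iff by auto
    also have "a2 M ?z \<in> WF" using z WF_iff mf wh by auto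
    then have "a1 M (a2 M (a2 M ?z)) = (rho ^^ (p - 1)) (a2 M ?z)"
      using inv_pow[of "a2 M ?z" p] p Suc rhop_period_shift[OF p(2)] by simp
    also have "\<dots> = (rho ^^ (p - 1)) ((rho ^^ (m + (p - 1) * i)) y)" using Suc by simp
    also have "\<dots> = (rho ^^ ((p - 1) + (m + (p - 1) * i))) y" by (rule fp_add[symmetric])
    also have "\<dots> = (rho ^^ (m + (p - 1) * Suc i)) y"
      by (rule arg_cong[where f="\<lambda>k. (rho ^^ k) y"]) simp
    finally show ?case .
  qed
  have key: "(rho ^^ (i + (p - 1) * i + i)) y = (rho ^^ i) y" for i
  proof -
    have "i + (p - 1) * i + i = p * i + i" using p(1)
      by (simp add: algebra_simps)
    then show ?thesis using rhop_mult[OF p(2)] by simp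
  qed
  consider i where "m = 2 * i" | i where "m = 2 * i + 1" by (metis oddE evenE)
  then show False
  proof cases
    case 1
    have "m + (p - 1) * i = i + (p - 1) * i + i" using 1 by simp
    then have "a2 M ((rho ^^ i) y) = (rho ^^ (i + (p - 1) * i + i)) y" using A[of i] by metis
    then have "a2 M ((rho ^^ i) y) = (rho ^^ i) y" using key by simp
    then show False using mf(9) rhop_WF[OF y] WF_iff by blast
  next
    case 2
    let ?z = "(rho ^^ i) y"
    have z: "?z \<in> WF" using rhop_WF[OF y] .
    have a1z: "a1 M ?z \<in> flags M" using z WF_iff mf by blast
    have "a1 M ?z = a2 M ((rho ^^ Suc i) y)" by (simp only: funpow.simps o_apply rho_def[of ?z] mf(6)[OF a1z])
    also have "\<dots> = (rho ^^ (m + (p - 1) * Suc i)) y" using A .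
    also have "m + (p - 1) * Suc i = (i + (p - 1) * i + i) + p" using 2 p(1) by (cases p) (simp_all add: algebra_simps)
    also have "(rho ^^ (i + (p - 1) * i + i + p)) y = (rho ^^ (i + (p - 1) * i + i)) y"
      by (simp add: funpow_add p(2))
    finally have "a1 M ?z = ?z" using key by simp
    then show False using mf(8) z WF_iff by blast
  qed
qed

lemma vertex_Ob: assumes r: "r \<in> WF" shows "vertex M r \<subseteq> Ob r \<union> a2 M ` Ob r"
  unfolding vertex_def
proof (rule orb_closed)
  show "r \<in> Ob r \<union> a2 M ` Ob r" using Ob_self by blast
next
  fix u f assume u: "u \<in> Ob r \<union> a2 M ` Ob r" "u \<in> flags M" "f \<in> {a1 M, a2 M}"
  obtain p where p: "p > 0" "(rho ^^ p) r = r" using per[OF r] by blast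
  show "f u \<in> Ob r \<union> a2 M ` Ob r"
  proof (cases "u \<in> Ob r")
    case True
    then have w: "u \<in> WF" using Ob_WF r by blast
    have a1u: "a1 M u \<in> flags M" using w WF_iff mf by blast
    have "a1 M u = a2 M (rho u)" by (simp only: rho_def[of u] mf(6)[OF a1u])
    then show ?thesis using u(3) True Ob_rho by auto
  next
    case False
    then obtain w where w: "w \<in> Ob r" "u = a2 M w" using u(1) by blast
    have wW: "w \<in> WF" using w Ob_WF r by blast
    have a2u: "a2 M u = w" using w mf wW WF_iff by auto
    obtain k where k: "w = (rho ^^ k) r" using w unfolding Ob_def by blast
    have "a1 M u = (rho ^^ (p - 1)) w" using inv_pow[OF wW p(1)] rhop_period_shift[OF p(2)] k w by simp
    then have "a1 M u \<in> Ob r" using Ob_pow w by simp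
    then show ?thesis using u(3) a2u w by auto
  qed
qed

end


context cmap begin

lemma rtW: "x \<in> flags M \<Longrightarrow> rt x \<in> WF" using rt_facts WF_iff by blast

lemma rt_comp: "x \<in> flags M \<Longrightarrow> y \<in> comp M x \<Longrightarrow> rt y = rt x" using rt_eq by blast

lemma rt_a: assumes "x \<in> flags M"
  shows "rt (a0 M x) = rt x" "rt (a1 M x) = rt x" "rt (a2 M x) = rt x"
  using rt_comp[OF assms] comp_step[OF assms self_comp] by auto

lemma rt_rho: "x \<in> WF \<Longrightarrow> rt ((rho ^^ k) x) = rt x"
  using rt_comp rhop_comp WF_iff by blast

lemma in_vertex_rt: assumes "x \<in> WF" shows "x \<in> vertex M (rt x)"
proof -
  have xf: "x \<in> flags M" "white M x" using assms WF_iff by auto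
  have "x \<in> comp M (rt x)" using comp_same[OF xf(1) rt_facts(3)[OF xf(1)] rt_facts(2)[OF xf(1)]] .
  then show ?thesis using same_vertex[OF rt_facts(3)[OF xf(1)] rt_facts(4)[OF xf(1)] _ xf(2)] by blast
qed

definition pos :: "nat \<Rightarrow> bool" where "pos x \<longleftrightarrow> x \<in> Ob (rt x)"

lemma pos_or: assumes x: "x \<in> WF" shows "pos x \<or> pos (a2 M x)"
proof -
  have xf: "x \<in> flags M" using x WF_iff by auto
  have "x \<in> Ob (rt x) \<union> a2 M ` Ob (rt x)" using vertex_Ob[OF rtW[OF xf]] in_vertex_rt[OF x] by blast
  moreover have "x \<in> a2 M ` Ob (rt x) \<Longrightarrow> a2 M x \<in> Ob (rt x)"
  proof -
    assume "x \<in> a2 M ` Ob (rt x)"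
    then obtain w where w: "w \<in> Ob (rt x)" "x = a2 M w" by blast
    have "w \<in> flags M" using w Ob_WF rtW[OF xf] WF_iff by blast
    then show ?thesis using w mf by auto
  qed
  ultimately show ?thesis unfolding pos_def using rt_a(3)[OF xf] by auto
qed

lemma pos_not_both: assumes x: "x \<in> WF" and p: "pos x" shows "\<not> pos (a2 M x)"
proof
  assume p2: "pos (a2 M x)"
  have xf: "x \<in> flags M" using x WF_iff by auto
  have e: "Ob x = Ob (rt x)" using Ob_eq[OF rtW[OF xf]] p pos_def by blast
  have "a2 M x \<in> Ob x" using p2 e rt_a(3)[OF xf] unfolding pos_def by simp
  then show False using dihedral[OF x] by blast
qed

lemma a2_WF: "x \<in> WF \<Longrightarrow> a2 M x \<in> WF" using WF_iff mf wh by auto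
lemma a1_WF: "x \<in> WF \<Longrightarrow> a1 M x \<in> WF" using WF_iff mf wh by auto

lemma pos_a2: "x \<in> WF \<Longrightarrow> pos (a2 M x) \<longleftrightarrow> \<not> pos x"
  using pos_or pos_not_both a2_WF mf WF_iff by (metis)

lemma pos_rho: assumes x: "x \<in> WF" and p: "pos x" shows "pos (rho x)"
proof -
  have "rho x \<in> Ob (rt x)" using Ob_rho p pos_def by blast
  moreover have "rt (rho x) = rt x" using rt_rho[OF x, of 1] by simp
  ultimately show ?thesis unfolding pos_def by simp
qed

lemma a1_eq: "x \<in> WF \<Longrightarrow> a1 M x = a2 M (rho x)"
  unfolding rho_def using WF_iff mf by auto

lemma pos_a1: assumes x: "x \<in> WF" shows "pos (a1 M x) \<longleftrightarrow> \<not> pos x"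
proof
  assume "pos (a1 M x)"
  then have "\<not> pos (rho x)" using a1_eq[OF x] pos_a2 rho_WF[OF x] by simp
  then show "\<not> pos x" using pos_rho x by blast
next
  assume np: "\<not> pos x"
  have xf: "x \<in> flags M" using x WF_iff by auto
  have p2: "pos (a2 M x)" using pos_a2 x np by blast
  have w: "a2 M x \<in> WF" using a2_WF[OF x] .
  obtain p where p: "p > 0" "(rho ^^ p) (a2 M x) = a2 M x" using per[OF w] by blast
  have "a1 M x = a1 M (a2 M (a2 M x))" using mf xf by simp
  also have "\<dots> = (rho ^^ (p - 1)) (a2 M x)" using inv_pow[OF w p] .
  finally have "a1 M x \<in> Ob (rt (a2 M x))" using Ob_pow p2 pos_def by simp
  then show "pos (a1 M x)" unfolding pos_def using rt_a[OF xf] by simp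
qed

definition pf :: "nat \<times> nat \<Rightarrow> nat" where "pf b = (THE x. x \<in> WF \<and> pos x \<and> dec M x = b)"

lemma pf_unique: assumes "x \<in> WF" "pos x" "y \<in> WF" "pos y" "dec M x = dec M y" shows "x = y"
proof -
  have xf: "x \<in> flags M" "y \<in> flags M" using assms WF_iff by auto
  have "y \<in> edge M x" using dec_inj[OF xf assms(5)] .
  then have "y \<in> {x, a0 M x, a2 M x, a0 M (a2 M x)}" using edge_explicit[OF map xf(1)] by simp
  moreover have "\<not> white M (a0 M x)" "\<not> white M (a0 M (a2 M x))"
    using assms(1) WF_iff wh mf xf by auto
  moreover have "white M y" using assms WF_iff by auto
  moreover have "\<not> pos (a2 M x)" using pos_a2 assms by blast
  ultimately show ?thesis using assms(4) by auto
qed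

lemma pf_ex: assumes b: "b \<in> boxes lam" shows "\<exists>x. x \<in> WF \<and> pos x \<and> dec M x = b"
proof -
  obtain y where y: "y \<in> flags M" "dec M y = b" using dec_surj b by (metis imageE)
  define w where "w = (if white M y then y else a0 M y)"
  have w: "w \<in> WF" "dec M w = b" unfolding w_def using y WF_iff mf wh dec_a0 by auto
  have "dec M (a2 M w) = b" using dec_a2 w WF_iff by auto
  then show ?thesis using pos_or[OF w(1)] w a2_WF[OF w(1)] by blast
qed

lemma pf_facts: assumes b: "b \<in> boxes lam" shows "pf b \<in> WF" "pos (pf b)" "dec M (pf b) = b"
proof -
  have "\<exists>!x. x \<in> WF \<and> pos x \<and> dec M x = b" using pf_ex[OF b] pf_unique by blast
  then have "pf b \<in> WF \<and> pos (pf b) \<and> dec M (pf b) = b" unfolding pf_def by (rule theI')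
  then show "pf b \<in> WF" "pos (pf b)" "dec M (pf b) = b" by auto
qed

lemma pf_dec: assumes "x \<in> WF" "pos x" shows "pf (dec M x) = x"
proof -
  have b: "dec M x \<in> boxes lam" using dec_in assms WF_iff by auto
  show ?thesis using pf_unique[OF pf_facts(1,2)[OF b] assms] pf_facts(3)[OF b] by simp
qed

definition sig :: "nat \<times> nat \<Rightarrow> nat \<times> nat" where
  "sig b = (if b \<in> boxes lam then dec M (rho (pf b)) else b)"

lemma sig_dec: assumes "x \<in> WF" "pos x" shows "sig (dec M x) = dec M (rho x)"
  using assms pf_dec dec_in WF_iff unfolding sig_def by auto

lemma sig_in: "b \<in> boxes lam \<Longrightarrow> sig b \<in> boxes lam"
  unfolding sig_def using pf_facts rho_WF dec_in WF_iff by auto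

lemma sig_perm: "sig permutes boxes lam"
proof (rule bij_imp_permutes)
  have inj: "inj_on sig (boxes lam)"
  proof (rule inj_onI)
    fix b c assume bc: "b \<in> boxes lam" "c \<in> boxes lam" "sig b = sig c"
    have r: "rho (pf b) \<in> WF" "pos (rho (pf b))" "rho (pf c) \<in> WF" "pos (rho (pf c))"
      using pf_facts[OF bc(1)] pf_facts[OF bc(2)] rho_WF pos_rho by auto
    have "dec M (rho (pf b)) = dec M (rho (pf c))" using bc unfolding sig_def by simp
    then have "rho (pf b) = rho (pf c)" using pf_unique r by blast
    then have "pf b = pf c" using rho_inj pf_facts bc by blast
    then show "b = c" using pf_facts(3) bc by metis
  qed
  have "sig ` boxes lam = boxes lam" using endo_inj_surj[OF finB _ inj] sig_in by blast
  then show "bij_betw sig (boxes lam) (boxes lam)" using inj bij_betw_def by blast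
qed (simp add: sig_def)

lemma sig_col: "b \<in> boxes lam \<Longrightarrow> snd (sig b) = snd b"
proof -
  assume b: "b \<in> boxes lam"
  have w: "pf b \<in> WF" using pf_facts[OF b] by simp
  have "rho (pf b) \<in> vertex M (pf b)" using rho_vertex[OF w] .
  then have "snd (dec M (rho (pf b))) = snd (dec M (pf b))" using vertex_dec w WF_iff by fastforce
  then show ?thesis using b pf_facts[OF b] unfolding sig_def by simp
qed

lemma sig_pow: assumes "x \<in> WF" "pos x" shows "(sig ^^ k) (dec M x) = dec M ((rho ^^ k) x)"
proof (induction k)
  case 0 then show ?case by simp
next
  case (Suc k)
  have w: "(rho ^^ k) x \<in> WF" "pos ((rho ^^ k) x)"
  proof -
    show "(rho ^^ k) x \<in> WF" using rhop_WF assms by blast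
    have "(rho ^^ k) x \<in> Ob (rt x)" using Ob_pow assms pos_def by blast
    then show "pos ((rho ^^ k) x)" unfolding pos_def using rt_rho assms by simp
  qed
  show ?case using Suc sig_dec[OF w] by simp
qed

lemma orbit_sig_dec: assumes "x \<in> WF" "pos x"
  shows "orbit sig (dec M x) = {dec M ((rho ^^ k) x) | k. True}"
proof -
  have p: "permutation sig" using sig_perm finB permutation_permutes by blast
  show ?thesis unfolding orbit_altdef_permutation[OF p] using sig_pow[OF assms] by simp
qed

lemma pos_rt: "x \<in> flags M \<Longrightarrow> pos (rt x)"
  unfolding pos_def using rt_comp[OF _ rt_facts(2)] rt_facts(3) Ob_self by metis

lemma rt_root: "x \<in> root M \<Longrightarrow> rt x = x"
proof -
  assume r: "x \<in> root M"
  then have xf: "x \<in> flags M" using rooted is_rooted_def by blast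
  show ?thesis using rt_facts(6)[OF xf r self_comp] by simp
qed

end


definition bidx :: "nat list \<Rightarrow> nat \<times> nat \<Rightarrow> nat" where
  "bidx lam = (SOME f. bij_betw f (boxes lam) {0..<card (boxes lam)})"

lemma bidx_bij: "finite (boxes lam) \<Longrightarrow> bij_betw (bidx lam) (boxes lam) {0..<card (boxes lam)}"
  unfolding bidx_def using ex_bij_betw_finite_nat someI_ex by (metis (mono_tags, lifting))

context cmap begin

lemma canon_inst: "canon (boxes lam) (bidx lam) sig"
  unfolding canon_def using finB bidx_bij sig_perm by blast

abbreviation CM where "CM \<equiv> canon.Can (boxes lam) (bidx lam) sig"
abbreviation FF where "FF \<equiv> canon.F (bidx lam)"

lemmas CS = canon.Can_simps[OF canon_inst]
lemmas Finj = canon.F_inj[OF canon_inst]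
lemmas Frange = canon.F_range[OF canon_inst]

definition tt :: "nat \<Rightarrow> nat" where
  "tt x = (if white M x then (if pos x then 0 else 1) else (if pos (a0 M x) then 2 else 3))"

definition phi :: "nat \<Rightarrow> nat" where "phi x = FF (dec M x) (tt x)"

lemma tt_lt: "tt x < 4" unfolding tt_def by auto

lemma phi_range: "x \<in> flags M \<Longrightarrow> phi x \<in> flags CM"
  unfolding phi_def using Frange dec_in tt_lt by blast

lemma a0_WF: "x \<in> flags M \<Longrightarrow> \<not> white M x \<Longrightarrow> a0 M x \<in> WF"
  using WF_iff mf wh by auto

lemma phi_inj: "inj_on phi (flags M)"
proof (rule inj_onI)
  fix x y assume x: "x \<in> flags M" and y: "y \<in> flags M" and e: "phi x = phi y"
  have d: "dec M x = dec M y" "tt x = tt y" using e Finj[OF dec_in[OF x] dec_in[OF y] tt_lt tt_lt]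
    unfolding phi_def by auto
  have "y \<in> edge M x" using dec_inj[OF x y d(1)] .
  then have yy: "y \<in> {x, a0 M x, a2 M x, a0 M (a2 M x)}" using edge_explicit[OF map x] by simp
  have w: "white M (a0 M x) \<longleftrightarrow> \<not> white M x" "white M (a2 M x) \<longleftrightarrow> white M x"
    "white M (a0 M (a2 M x)) \<longleftrightarrow> \<not> white M x" using wh x mf by auto
  have wy: "white M y \<longleftrightarrow> white M x" using d(2) unfolding tt_def by (auto split: if_splits)
  show "x = y"
  proof (cases "white M x")
    case True
    then have xw: "x \<in> WF" using x WF_iff by auto
    have "y = x \<or> y = a2 M x" using yy w wy True by auto
    moreover have "y = a2 M x \<Longrightarrow> False"
    proof -
      assume "y = a2 M x"
      then have "pos y \<longleftrightarrow> \<not> pos x" using pos_a2[OF xw] by simp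
      then show False using d(2) True wy unfolding tt_def by (auto split: if_splits)
    qed
    ultimately show ?thesis by auto
  next
    case False
    have a0w: "a0 M x \<in> WF" using a0_WF[OF x False] .
    have "y = x \<or> y = a2 M x" using yy w wy False by auto
    moreover have "y = a2 M x \<Longrightarrow> False"
    proof -
      assume "y = a2 M x"
      then have "a0 M y = a2 M (a0 M x)" using mf x by simp
      then have "pos (a0 M y) \<longleftrightarrow> \<not> pos (a0 M x)" using pos_a2[OF a0w] by simp
      then show False using d(2) False wy unfolding tt_def by (auto split: if_splits)
    qed
    ultimately show ?thesis by auto
  qed
qed

lemma phi_surj: "flags CM \<subseteq> phi ` flags M"
proof
  fix z assume z: "z \<in> flags CM"
  obtain b t where bt: "b \<in> boxes lam" "t < 4" "z = FF b t"
    using canon.flag_cases[OF canon_inst z] by blast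
  note pfb = pf_facts[OF bt(1)]
  let ?x = "pf b"
  have xf: "?x \<in> flags M" "white M ?x" using pfb WF_iff by auto
  have "phi ?x = FF b 0" unfolding phi_def tt_def using pfb xf by simp
  moreover have "phi (a2 M ?x) = FF b 1" unfolding phi_def tt_def
    using pfb xf wh pos_a2 dec_a2 by simp
  moreover have "phi (a0 M ?x) = FF b 2" unfolding phi_def tt_def
    using pfb xf wh mf dec_a0 by simp
  moreover have "phi (a0 M (a2 M ?x)) = FF b 3" unfolding phi_def tt_def
    using pfb xf wh mf dec_a0 dec_a2 pos_a2 by simp
  moreover have "?x \<in> flags M" "a2 M ?x \<in> flags M" "a0 M ?x \<in> flags M" "a0 M (a2 M ?x) \<in> flags M"
    using xf mf by auto
  ultimately show "z \<in> phi ` flags M" using bt canon.t_cases[OF canon_inst] by (metis image_eqI)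
qed

lemma phi_bij: "bij_betw phi (flags M) (flags CM)"
  unfolding bij_betw_def using phi_inj phi_surj phi_range by blast

lemma sig_inv: "b \<in> boxes lam \<Longrightarrow> inv sig (sig b) = b"
  using sig_perm permutes_inverses(2) by metis

lemma phi_a:
  assumes x: "x \<in> flags M"
  shows "phi (a0 M x) = a0 CM (phi x)" "phi (a1 M x) = a1 CM (phi x)" "phi (a2 M x) = a2 CM (phi x)"
proof -
  have b: "dec M x \<in> boxes lam" using dec_in[OF x] .
  note cs = CS[OF b]
  have da: "dec M (a0 M x) = dec M x" "dec M (a2 M x) = dec M x" using dec_a0 dec_a2 x by auto
  have "(phi (a0 M x) = a0 CM (phi x) \<and> phi (a1 M x) = a1 CM (phi x) \<and> phi (a2 M x) = a2 CM (phi x))"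
  proof (cases "white M x")
    case True
    then have xw: "x \<in> WF" using x WF_iff by auto
    have w: "\<not> white M (a0 M x)" "white M (a2 M x)" "white M (a1 M x)" using wh x True by auto
    have aa: "a0 M (a0 M x) = x" using mf x by simp
    show ?thesis
    proof (cases "pos x")
      case True
      have px: "phi x = FF (dec M x) 0" unfolding phi_def tt_def using True \<open>white M x\<close> by simp
      have a1p: "\<not> pos (a1 M x)" using pos_a1[OF xw] True by simp
      have d1: "dec M (a1 M x) = sig (dec M x)"
      proof -
        have "dec M (a1 M x) = dec M (a2 M (a1 M x))" using dec_a2 mf x by simp
        also have "\<dots> = dec M (rho x)" unfolding rho_def ..
        also have "\<dots> = sig (dec M x)" using sig_dec[OF xw True] by simp
        finally show ?thesis .
      qed
      show ?thesis unfolding px using cs w aa True a1p pos_a2[OF xw] da d1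
        unfolding phi_def tt_def by simp
    next
      case False
      have px: "phi x = FF (dec M x) 1" unfolding phi_def tt_def using False \<open>white M x\<close> by simp
      have a1p: "pos (a1 M x)" using pos_a1[OF xw] False by simp
      have a1w: "a1 M x \<in> WF" using a1_WF[OF xw] .
      have d1: "dec M (a1 M x) = inv sig (dec M x)"
      proof -
        have "sig (dec M (a1 M x)) = dec M (rho (a1 M x))" using sig_dec[OF a1w a1p] .
        also have "rho (a1 M x) = a2 M x" unfolding rho_def using mf x by simp
        finally have "sig (dec M (a1 M x)) = dec M x" using da by simp
        then show ?thesis using sig_inv dec_in mf x by metis
      qed
      show ?thesis unfolding px using cs w aa False a1p pos_a2[OF xw] da d1
        unfolding phi_def tt_def by simp
    qed
  next
    case False
    have a0w: "a0 M x \<in> WF" using a0_WF[OF x False] .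
    have w: "white M (a0 M x)" "\<not> white M (a2 M x)" "\<not> white M (a1 M x)" using wh x False by auto
    have aa: "a0 M (a0 M x) = x" using mf x by simp
    have a02: "a0 M (a2 M x) = a2 M (a0 M x)" using mf x by simp
    have lf: "a1 M x = a2 M x" using leaf[OF x False] .
    show ?thesis
    proof (cases "pos (a0 M x)")
      case True
      have px: "phi x = FF (dec M x) 2" unfolding phi_def tt_def using True False by simp
      show ?thesis unfolding px using cs w aa True pos_a2[OF a0w] da a02 lf False
        unfolding phi_def tt_def by simp
    next
      case f2: False
      have px: "phi x = FF (dec M x) 3" unfolding phi_def tt_def using f2 False by simp
      show ?thesis unfolding px using cs w aa f2 pos_a2[OF a0w] da a02 lf False
        unfolding phi_def tt_def by simp
    qed
  qed
  then show "phi (a0 M x) = a0 CM (phi x)" "phi (a1 M x) = a1 CM (phi x)" "phi (a2 M x) = a2 CM (phi x)"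
    by auto
qed

lemma phi_white: "x \<in> flags M \<Longrightarrow> white CM (phi x) = white M x"
  unfolding phi_def using CS(13)[OF dec_in] tt_lt unfolding tt_def by auto

lemma phi_dec: "x \<in> flags M \<Longrightarrow> dec CM (phi x) = dec M x"
  unfolding phi_def using CS(14)[OF dec_in] tt_lt by auto

lemma orbit_sig_sub: assumes x: "x \<in> WF" "pos x" shows "orbit sig (dec M x) \<subseteq> dec M ` comp M x"
  using orbit_sig_dec[OF x] rhop_comp[OF x(1)] by blast

lemma phi_root: assumes x: "x \<in> flags M" shows "phi x \<in> root CM \<longleftrightarrow> x \<in> root M"
proof
  assume r: "x \<in> root M"
  have xw: "x \<in> WF" using rooted r unfolding is_rooted_def WF_iff by blast
  have p: "pos x" using pos_rt[OF x] rt_root[OF r] by simp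
  have px: "phi x = FF (dec M x) 0" unfolding phi_def tt_def using p xw WF_iff by simp
  have b: "dec M x \<in> boxes lam" using dec_in[OF x] .
  have fo: "finite (orbit sig (dec M x))" using perm_orbit_facts(5)[OF sig_perm finB b] .
  have io: "dec M x \<in> orbit sig (dec M x)" using perm_orbit_facts(1)[OF sig_perm finB b] .
  have le: "\<And>c. c \<in> orbit sig (dec M x) \<Longrightarrow> dec M x \<le> c"
  proof -
    fix c assume "c \<in> orbit sig (dec M x)"
    then obtain y where "y \<in> comp M x" "c = dec M y" using orbit_sig_sub[OF xw p] by blast
    then show "dec M x \<le> c" using rdec r unfolding rooted_dec_def lex_le_iff by blast
  qed
  have "Min (orbit sig (dec M x)) = dec M x" by (rule Min_eqI[OF fo le io])
  then have "dec M x \<in> boxes lam \<and> dec M x = Min (orbit sig (dec M x))" using b by simp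
  then show "phi x \<in> root CM" unfolding px canon.Can_root[OF canon_inst] by blast
next
  assume "phi x \<in> root CM"
  then obtain c where c: "c \<in> boxes lam" "c = Min (orbit sig c)" "phi x = FF c 0"
    unfolding canon.Can_root[OF canon_inst] by blast
  have d: "dec M x = c" "tt x = 0" using c(3) Finj[OF dec_in[OF x] c(1) tt_lt, of 0] unfolding phi_def by auto
  then have xw: "x \<in> WF" and p: "pos x" unfolding tt_def using x WF_iff by (auto split: if_splits)
  let ?r = "rt x"
  note rr = rt_facts(1)[OF x] rt_facts(2)[OF x] rt_facts(3)[OF x]
  have rw: "?r \<in> WF" "pos ?r" using rtW[OF x] pos_rt[OF x] by auto
  have xc: "x \<in> comp M ?r" using comp_same[OF x rr(3) rr(2)] .
  have le1: "dec M ?r \<le> dec M x" using rdec rr(1) xc unfolding rooted_dec_def lex_le_iff by blast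
  obtain k where k: "x = (rho ^^ k) ?r" using p unfolding pos_def Ob_def by blast
  have "dec M ((rho ^^ k) ?r) = dec M x" using k by metis
  then have "dec M x \<in> {dec M ((rho ^^ k) ?r) | k. True}" by (intro CollectI exI[of _ k]) simp
  then have "dec M x \<in> orbit sig (dec M ?r)" using orbit_sig_dec[OF rw] by simp
  moreover have br: "dec M ?r \<in> boxes lam" using dec_in[OF rr(3)] .
  ultimately have oe: "orbit sig (dec M x) = orbit sig (dec M ?r)"
    using perm_orbit_facts(6)[OF sig_perm finB br] by blast
  have "dec M ?r \<in> orbit sig c" using oe d perm_orbit_facts(1)[OF sig_perm finB br] by simp
  then have "c \<le> dec M ?r" using c(2) perm_orbit_facts(5)[OF sig_perm finB c(1)] by (metis Min_le)
  then have "dec M ?r = dec M x" using le1 d by simp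
  then have "x = ?r" using pf_unique[OF xw p rw] by simp
  then show "x \<in> root M" using rr by simp
qed

lemma iso_CM: "iso_by phi M CM"
  unfolding iso_by_def using phi_bij phi_a phi_white phi_dec phi_root by blast

lemma iso_CM': "iso M CM" using iso_CM iso_iff by blast

end


lemma sig_iso_invariant:
  assumes cm: "cmap M lam" and cn: "cmap N lam" and iso: "iso_by \<psi> M N"
  shows "cmap.sig M lam = cmap.sig N lam"
proof -
  interpret m: cmap M lam by (rule cm)
  interpret n: cmap N lam by (rule cn)
  have b: "bij_betw \<psi> (flags M) (flags N)" using iso iso_by_def by blast
  have c: "\<And>x. x \<in> flags M \<Longrightarrow> \<psi> (a0 M x) = a0 N (\<psi> x) \<and> \<psi> (a1 M x) = a1 N (\<psi> x) \<and> \<psi> (a2 M x) = a2 N (\<psi> x) \<and>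
      white N (\<psi> x) = white M x \<and> dec N (\<psi> x) = dec M x \<and> (\<psi> x \<in> root N \<longleftrightarrow> x \<in> root M)"
    using iso unfolding iso_by_def by blast
  have pf: "\<And>x. x \<in> flags M \<Longrightarrow> \<psi> x \<in> flags N" by (rule bij_betw_apply[OF b])
  have inj: "inj_on \<psi> (flags M)" using b bij_betw_def by blast
  have rt: "\<And>x. x \<in> flags M \<Longrightarrow> \<psi> (m.rt x) = n.rt (\<psi> x)"
  proof -
    fix x assume x: "x \<in> flags M"
    have "\<psi> (m.rt x) \<in> root N" using c m.rt_facts(1,3)[OF x] by blast
    moreover have "\<psi> (m.rt x) \<in> comp N (\<psi> x)" using iso_comp[OF iso m.map x] m.rt_facts(2)[OF x] by blast
    ultimately show "\<psi> (m.rt x) = n.rt (\<psi> x)" using n.rt_facts(6)[OF pf[OF x]] by blast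
  qed
  have WF: "\<And>x. x \<in> m.WF \<Longrightarrow> \<psi> x \<in> n.WF" using pf c m.WF_iff n.WF_iff by blast
  have rho: "\<And>x. x \<in> m.WF \<Longrightarrow> \<psi> (m.rho x) = n.rho (\<psi> x)"
    unfolding m.rho_def n.rho_def using c m.mf m.WF_iff by metis
  have rhop: "\<And>x k. x \<in> m.WF \<Longrightarrow> \<psi> ((m.rho ^^ k) x) = (n.rho ^^ k) (\<psi> x)"
  proof -
    fix x k assume x: "x \<in> m.WF"
    show "\<psi> ((m.rho ^^ k) x) = (n.rho ^^ k) (\<psi> x)"
      by (induction k) (use rho m.rhop_WF[OF x] in auto)
  qed
  have pos: "\<And>x. x \<in> m.WF \<Longrightarrow> n.pos (\<psi> x) \<longleftrightarrow> m.pos x"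
  proof -
    fix x assume x: "x \<in> m.WF"
    have xf: "x \<in> flags M" using x m.WF_iff by blast
    have rw: "m.rt x \<in> m.WF" using m.rtW[OF xf] .
    show "n.pos (\<psi> x) \<longleftrightarrow> m.pos x"
    proof
      assume "m.pos x"
      then obtain k where k: "x = (m.rho ^^ k) (m.rt x)" unfolding m.pos_def m.Ob_def by blast
      have "\<psi> x = (n.rho ^^ k) (n.rt (\<psi> x))" using rhop[OF rw, of k] rt[OF xf] k by metis
      then show "n.pos (\<psi> x)" unfolding n.pos_def n.Ob_def by blast
    next
      assume "n.pos (\<psi> x)"
      then obtain k where k: "\<psi> x = (n.rho ^^ k) (n.rt (\<psi> x))" unfolding n.pos_def n.Ob_def by blast
      then have "\<psi> x = \<psi> ((m.rho ^^ k) (m.rt x))" using rhop[OF rw, of k] rt[OF xf] by metis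
      moreover have "(m.rho ^^ k) (m.rt x) \<in> flags M" using m.rhop_WF[OF rw] m.WF_iff by blast
      ultimately have "x = (m.rho ^^ k) (m.rt x)" using inj xf unfolding inj_on_def by metis
      then show "m.pos x" unfolding m.pos_def m.Ob_def by blast
    qed
  qed
  show ?thesis
  proof
    fix bb
    show "m.sig bb = n.sig bb"
    proof (cases "bb \<in> boxes lam")
      case True
      note pm = m.pf_facts[OF True]
      have xf: "m.pf bb \<in> flags M" using pm m.WF_iff by blast
      have "\<psi> (m.pf bb) \<in> n.WF" "n.pos (\<psi> (m.pf bb))" "dec N (\<psi> (m.pf bb)) = bb"
        using WF pos pm c xf by auto
      then have e: "n.pf bb = \<psi> (m.pf bb)" using n.pf_dec by metis
      have rf: "m.rho (m.pf bb) \<in> flags M" using m.rho_WF pm m.WF_iff by blast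
      have "n.sig bb = dec N (n.rho (\<psi> (m.pf bb)))" unfolding n.sig_def e using True by simp
      also have "\<dots> = dec N (\<psi> (m.rho (m.pf bb)))" using rho pm by simp
      also have "\<dots> = dec M (m.rho (m.pf bb))" using c rf by blast
      also have "\<dots> = m.sig bb" unfolding m.sig_def using True by simp
      finally show ?thesis by simp
    next
      case False
      then show ?thesis unfolding m.sig_def n.sig_def by simp
    qed
  qed
qed


lemma Can_cmap:
  assumes cn: "canon B idx \<sigma>" and Bl: "B = boxes lam" and col: "\<forall>b\<in>B. snd (\<sigma> b) = snd b"
  shows "cmap (canon.Can B idx \<sigma>) lam"
proof -
  interpret canon B idx \<sigma> by (rule cn)
  show ?thesis
    unfolding cmap_def bmap_def cmap_axioms_def
    using Can_is_map Can_bip Can_rooted Can_decorated[OF col Bl] Can_rooted_dec edges_Can finB Bl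
      nwhite_Can ncc_Can by simp
qed

lemma Can_sig:
  assumes cn: "canon B idx \<sigma>" and Bl: "B = boxes lam" and col: "\<forall>b\<in>B. snd (\<sigma> b) = snd b"
  shows "cmap.sig (canon.Can B idx \<sigma>) lam = \<sigma>"
proof -
  interpret canon B idx \<sigma> by (rule cn)
  interpret c: cmap Can lam by (rule Can_cmap[OF cn Bl col])
  have rho: "\<And>d. d \<in> B \<Longrightarrow> c.rho (F d 0) = F (\<sigma> d) 0"
    unfolding c.rho_def using Can_simps sigma_in by simp
  have rhop: "\<And>m k. m \<in> B \<Longrightarrow> (c.rho ^^ k) (F m 0) = F ((\<sigma> ^^ k) m) 0 \<and> (\<sigma> ^^ k) m \<in> B"
  proof -
    fix m k assume m: "m \<in> B"
    show "(c.rho ^^ k) (F m 0) = F ((\<sigma> ^^ k) m) 0 \<and> (\<sigma> ^^ k) m \<in> B"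
      by (induction k) (use m rho sigma_in in auto)
  qed
  show ?thesis
  proof
    fix b
    show "c.sig b = \<sigma> b"
    proof (cases "b \<in> B")
      case True
      note mf = mn_facts[OF True]
      have fl: "F b 0 \<in> flags Can" using Fin True by simp
      have w: "F b 0 \<in> c.WF" using fl Can_simps(13)[OF True, of 0] c.WF_iff by simp
      have r1: "F (mn b) 0 \<in> root Can" using root_mem mf by simp
      have r2: "F (mn b) 0 \<in> comp Can (F b 0)" using face_Can(2)[OF True, of 0] Cset_mem mf by simp
      have rt: "c.rt (F b 0) = F (mn b) 0" using c.rt_facts(6)[OF fl r1 r2] by simp
      have p: "permutation \<sigma>" using perm finB permutation_permutes by blast
      have "b \<in> orbit \<sigma> (mn b)" using mf(3) orb_facts(1)[OF True] by simp
      then have "b \<in> {(\<sigma> ^^ n) (mn b) | n. True}" using orbit_altdef_permutation[OF p, of "mn b"] by simp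
      then obtain k where k: "b = (\<sigma> ^^ k) (mn b)" by blast
      have "F b 0 = (c.rho ^^ k) (F (mn b) 0)" using rhop[OF mf(2), of k] k by simp
      then have pos: "c.pos (F b 0)" unfolding c.pos_def c.Ob_def rt by blast
      have "c.pf b = F b 0" using c.pf_dec[OF w pos] Can_simps(14)[OF True, of 0] by simp
      then show ?thesis unfolding c.sig_def using True rho[OF True] Can_simps(14)[OF sigma_in[OF True], of 0] Bl
        by simp
    next
      case False
      then show ?thesis unfolding c.sig_def using Bl perm permutes_not_in by metis
    qed
  qed
qed


lemma boxes_Sigma: "boxes lam = Sigma {1..length lam} (\<lambda>i. {1..lam ! (i - 1)})"
  unfolding boxes_def by auto

lemma finite_boxes: "finite (boxes lam)"
  unfolding boxes_Sigma by auto

lemma card_boxes: "card (boxes lam) = sum_list lam"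
proof -
  have "card (boxes lam) = (\<Sum>i\<in>{1..length lam}. lam ! (i - 1))"
    unfolding boxes_Sigma by (subst card_SigmaI) auto
  also have "\<dots> = (\<Sum>i\<in>Suc ` {0..<length lam}. lam ! (i - 1))"
    by (rule sum.cong) (auto simp: image_iff intro: bexI[of _ "i - 1" for i])
  also have "\<dots> = (\<Sum>i = 0..<length lam. lam ! i)" by (subst sum.reindex) auto
  also have "\<dots> = sum_list lam" by (simp add: sum_list_sum_nth)
  finally show ?thesis .
qed

definition Cn :: "nat list \<Rightarrow> (nat \<times> nat \<Rightarrow> nat \<times> nat) \<Rightarrow> dmap" where
  "Cn lam \<sigma> = canon.Can (boxes lam) (bidx lam) \<sigma>"

definition Perms :: "nat list \<Rightarrow> (nat \<times> nat \<Rightarrow> nat \<times> nat) set" where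
  "Perms lam = {\<sigma>. \<sigma> permutes boxes lam \<and> (\<forall>b\<in>boxes lam. snd (\<sigma> b) = snd b)}"

definition G :: "nat list \<Rightarrow> (nat \<Rightarrow> int) \<Rightarrow> (nat \<times> nat \<Rightarrow> nat \<times> nat) \<Rightarrow> int" where
  "G lam p \<sigma> = (-1) ^ (card (boxes lam) - card (canon.R (boxes lam) \<sigma>)) *
      (\<Prod>b\<in>canon.R (boxes lam) \<sigma>. p (card (orbit \<sigma> b)))"

definition val :: "nat list \<Rightarrow> (dmap \<Rightarrow> nat) \<Rightarrow> (nat \<Rightarrow> int) \<Rightarrow> dmap \<Rightarrow> int" where
  "val lam th p M = (-1) ^ (sum_list lam - nwhite M) * 0 ^ (nwhite M - ncc M) * (0 - 1) ^ th M * ptype p M"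

lemma Fa_unfold: "Fa 0 lam th p = (\<Sum>C\<in>ID (sum_list lam) lam. val lam th p (SOME M. M \<in> C))"
  unfolding Fa_def val_def Let_def by simp

lemma canon_lam: "\<sigma> \<in> Perms lam \<Longrightarrow> canon (boxes lam) (bidx lam) \<sigma>"
  unfolding canon_def Perms_def using finite_boxes bidx_bij by blast

lemma IDrep_bmap: "M \<in> IDrep (sum_list lam) lam \<Longrightarrow> bmap M lam"
  unfolding IDrep_def bmap_def using card_boxes finite_boxes by simp

abbreviation Rel :: "nat list \<Rightarrow> (dmap \<times> dmap) set" where
  "Rel lam \<equiv> {(M, N). M \<in> IDrep (sum_list lam) lam \<and> N \<in> IDrep (sum_list lam) lam \<and> iso M N}"

lemma equiv_Rel: "equiv (IDrep (sum_list lam) lam) (Rel lam)"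
proof (rule equivI)
  show "refl_on (IDrep (sum_list lam) lam) (Rel lam)" unfolding refl_on_def using iso_refl by auto
  show "sym (Rel lam)" unfolding sym_def using iso_sym IDrep_def by auto
  show "trans (Rel lam)" unfolding trans_def using iso_trans by auto
qed (auto)

lemma val_iso:
  assumes th: "nonorient_stat th" and M: "M \<in> IDrep (sum_list lam) lam" and i: "iso M N"
  shows "val lam th p N = val lam th p M"
proof -
  have mp: "is_map M" using M IDrep_def by simp
  obtain \<phi> where \<phi>: "iso_by \<phi> M N" using i iso_iff by blast
  have t: "th M = th N" using th mp i unfolding nonorient_stat_def by blast
  show ?thesis unfolding val_def using iso_nwhite[OF \<phi> mp] iso_ncc[OF \<phi> mp] iso_ptype[OF \<phi> mp] t
    by simp
qed

lemma val_noncontr: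
  assumes M: "M \<in> IDrep (sum_list lam) lam" and "nwhite M \<noteq> ncc M"
  shows "val lam th p M = 0"
proof -
  have "ncc M \<le> nwhite M" using bmap.ncc_le[OF IDrep_bmap[OF M]] .
  then have "nwhite M - ncc M > 0" using assms(2) by simp
  then show ?thesis unfolding val_def by simp
qed

lemma Cn_IDrep: "\<sigma> \<in> Perms lam \<Longrightarrow> Cn lam \<sigma> \<in> IDrep (sum_list lam) lam"
  unfolding Cn_def using canon.Can_IDrep[OF canon_lam] card_boxes Perms_def by fastforce

lemma Cn_cmap: "\<sigma> \<in> Perms lam \<Longrightarrow> cmap (Cn lam \<sigma>) lam"
  unfolding Cn_def using Can_cmap[OF canon_lam] Perms_def by blast

lemma Cn_sig: "\<sigma> \<in> Perms lam \<Longrightarrow> cmap.sig (Cn lam \<sigma>) lam = \<sigma>"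
  unfolding Cn_def using Can_sig[OF canon_lam] Perms_def by blast

lemma Cn_val:
  assumes th: "nonorient_stat th" and s: "\<sigma> \<in> Perms lam"
  shows "val lam th p (Cn lam \<sigma>) = G lam p \<sigma>"
proof -
  interpret canon "boxes lam" "bidx lam" \<sigma> by (rule canon_lam[OF s])
  have "th Can = 0" using th Can_is_map Can_orientable unfolding nonorient_stat_def by blast
  then show ?thesis unfolding val_def G_def Cn_def
    using nwhite_Can ncc_Can ptype_Can card_boxes by simp
qed

lemma cmap_sig_Perms: "cmap M lam \<Longrightarrow> cmap.sig M lam \<in> Perms lam"
  unfolding Perms_def using cmap.sig_perm cmap.sig_col by blast

lemma cmap_iso_Cn: "cmap M lam \<Longrightarrow> iso M (Cn lam (cmap.sig M lam))"
  unfolding Cn_def using cmap.iso_CM' by blast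


definition key :: "nat list \<Rightarrow> dmap \<Rightarrow> _" where
  "key lam M = (let D = {0..<4 * sum_list lam} in
     (restrict (a0 M) D, restrict (a1 M) D, restrict (a2 M) D, restrict (white M) D, root M, restrict (dec M) D))"

lemma key_finite: "finite (key lam ` IDrep (sum_list lam) lam)"
proof -
  let ?D = "{0..<4 * sum_list lam}"
  let ?K = "(?D \<rightarrow>\<^sub>E ?D) \<times> (?D \<rightarrow>\<^sub>E ?D) \<times> (?D \<rightarrow>\<^sub>E ?D) \<times> (?D \<rightarrow>\<^sub>E (UNIV :: bool set)) \<times> Pow ?D \<times> (?D \<rightarrow>\<^sub>E boxes lam)"
  have f1: "finite (?D \<rightarrow>\<^sub>E ?D)" by (rule finite_PiE) auto
  have f2: "finite (?D \<rightarrow>\<^sub>E (UNIV :: bool set))" by (rule finite_PiE) auto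
  have f3: "finite (?D \<rightarrow>\<^sub>E boxes lam)" by (rule finite_PiE) (auto simp: finite_boxes)
  have f4: "finite (Pow ?D)" by simp
  have fK: "finite ?K"
    by (rule finite_cartesian_product[OF f1 finite_cartesian_product[OF f1 finite_cartesian_product[OF f1
          finite_cartesian_product[OF f2 finite_cartesian_product[OF f4 f3]]]]])
  have sub: "key lam ` IDrep (sum_list lam) lam \<subseteq> ?K"
  proof
    fix k assume "k \<in> key lam ` IDrep (sum_list lam) lam"
    then obtain M where M: "M \<in> IDrep (sum_list lam) lam" "k = key lam M" by blast
    have fl: "flags M = ?D" and mp: "is_map M" and rt: "is_rooted M" and dc: "is_decorated lam M"
      using M unfolding IDrep_def by auto
    have "\<forall>x\<in>?D. a0 M x \<in> ?D \<and> a1 M x \<in> ?D \<and> a2 M x \<in> ?D"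
    proof
      fix x assume "x \<in> ?D"
      then have "x \<in> flags M" using fl by simp
      then show "a0 M x \<in> ?D \<and> a1 M x \<in> ?D \<and> a2 M x \<in> ?D" using map_facts(1-3)[OF mp] fl by simp
    qed
    moreover have "root M \<subseteq> ?D" using rt fl unfolding is_rooted_def by simp
    moreover have "\<forall>x\<in>?D. dec M x \<in> boxes lam" using dc fl unfolding is_decorated_def by simp
    ultimately show "k \<in> ?K" unfolding M(2) key_def Let_def by auto
  qed
  show ?thesis by (rule finite_subset[OF sub fK])
qed

lemma key_iso:
  assumes M: "M \<in> IDrep (sum_list lam) lam" and N: "N \<in> IDrep (sum_list lam) lam" and k: "key lam M = key lam N"
  shows "iso M N"
proof -
  let ?D = "{0..<4 * sum_list lam}"
  have fl: "flags M = ?D" "flags N = ?D" using M N unfolding IDrep_def by auto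
  have e: "restrict (a0 M) ?D = restrict (a0 N) ?D" "restrict (a1 M) ?D = restrict (a1 N) ?D"
    "restrict (a2 M) ?D = restrict (a2 N) ?D" "restrict (white M) ?D = restrict (white N) ?D"
    "root M = root N" "restrict (dec M) ?D = restrict (dec N) ?D"
    using k unfolding key_def Let_def by auto
  have "\<And>x. x \<in> ?D \<Longrightarrow> a0 M x = a0 N x \<and> a1 M x = a1 N x \<and> a2 M x = a2 N x \<and> white M x = white N x \<and> dec M x = dec N x"
    using e by (metis restrict_apply')
  then have "iso_by id M N" unfolding iso_by_def using fl e(5) by (auto simp: bij_betw_def)
  then show ?thesis using iso_iff by blast
qed

lemma quotient_finite: "finite (IDrep (sum_list lam) lam // Rel lam)"
proof -
  let ?I = "IDrep (sum_list lam) lam"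
  let ?rk = "\<lambda>k. Rel lam `` {SOME M. M \<in> ?I \<and> key lam M = k}"
  have sub: "?I // Rel lam \<subseteq> ?rk ` (key lam ` ?I)"
  proof
    fix C assume "C \<in> ?I // Rel lam"
    then obtain M where M: "M \<in> ?I" "C = Rel lam `` {M}" by (auto elim: quotientE)
    let ?M' = "SOME M'. M' \<in> ?I \<and> key lam M' = key lam M"
    have M': "?M' \<in> ?I \<and> key lam ?M' = key lam M" by (rule someI[of _ M]) (use M in simp)
    then have "(?M', M) \<in> Rel lam" using key_iso M by auto
    then have "Rel lam `` {?M'} = Rel lam `` {M}" using equiv_class_eq[OF equiv_Rel] by blast
    then show "C \<in> ?rk ` (key lam ` ?I)" using M by blast
  qed
  show ?thesis by (rule finite_subset[OF sub finite_imageI[OF key_finite]])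
qed

lemma main_formula:
  assumes th: "nonorient_stat th"
  shows "Fa 0 lam th p = (\<Sum>\<sigma>\<in>Perms lam. G lam p \<sigma>)"
proof -
  let ?I = "IDrep (sum_list lam) lam"
  let ?Q = "?I // Rel lam"
  let ?rep = "\<lambda>C. SOME M. M \<in> C"
  let ?f = "\<lambda>C. val lam th p (?rep C)"
  have eqv: "equiv ?I (Rel lam)" by (rule equiv_Rel)
  have rep: "\<And>C. C \<in> ?Q \<Longrightarrow> ?rep C \<in> C \<and> ?rep C \<in> ?I \<and> C = Rel lam `` {?rep C}"
  proof -
    fix C assume C: "C \<in> ?Q"
    then obtain M where M: "M \<in> ?I" "C = Rel lam `` {M}" by (auto elim: quotientE)
    have "M \<in> C" using M equiv_class_self[OF eqv] by blast
    then have r: "?rep C \<in> C" by (rule someI)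
    then have mr: "(M, ?rep C) \<in> Rel lam" using M by blast
    then have e1: "Rel lam `` {M} = Rel lam `` {?rep C}" by (rule equiv_class_eq[OF eqv])
    have e2: "?rep C \<in> ?I" using mr by blast
    have e3: "C = Rel lam `` {?rep C}" using M(2) e1 by (rule trans)
    show "?rep C \<in> C \<and> ?rep C \<in> ?I \<and> C = Rel lam `` {?rep C}"
      using r e2 e3 by blast
  qed
  let ?Q' = "{C \<in> ?Q. nwhite (?rep C) = ncc (?rep C)}"
  have s1: "(\<Sum>C\<in>?Q. ?f C) = (\<Sum>C\<in>?Q'. ?f C)"
    by (rule sum.mono_neutral_right[OF quotient_finite]) (use rep val_noncontr in auto)
  let ?h = "\<lambda>\<sigma>. Rel lam `` {Cn lam \<sigma>}"
  have hQ: "\<And>\<sigma>. \<sigma> \<in> Perms lam \<Longrightarrow> ?h \<sigma> \<in> ?Q"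
  proof -
    fix \<sigma> assume "\<sigma> \<in> Perms lam"
    then have "Cn lam \<sigma> \<in> ?I" by (rule Cn_IDrep)
    then show "?h \<sigma> \<in> ?Q" by (rule quotientI)
  qed
  have hrep: "\<And>\<sigma>. \<sigma> \<in> Perms lam \<Longrightarrow> iso (Cn lam \<sigma>) (?rep (?h \<sigma>))"
    using rep[OF hQ] by blast
  have hval: "\<And>\<sigma>. \<sigma> \<in> Perms lam \<Longrightarrow> ?f (?h \<sigma>) = G lam p \<sigma>"
    using val_iso[OF th Cn_IDrep hrep] Cn_val[OF th] by simp
  have bij: "bij_betw ?h (Perms lam) ?Q'"
  proof (rule bij_betw_imageI)
    show "inj_on ?h (Perms lam)"
    proof (rule inj_onI)
      fix \<sigma> \<tau> assume s: "\<sigma> \<in> Perms lam" "\<tau> \<in> Perms lam" "?h \<sigma> = ?h \<tau>"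
      have "(Cn lam \<sigma>, Cn lam \<tau>) \<in> Rel lam" using eq_equiv_class[OF s(3) eqv] Cn_IDrep s by blast
      then obtain \<psi> where "iso_by \<psi> (Cn lam \<sigma>) (Cn lam \<tau>)" using iso_iff by blast
      then have "cmap.sig (Cn lam \<sigma>) lam = cmap.sig (Cn lam \<tau>) lam"
        using sig_iso_invariant Cn_cmap s by blast
      then show "\<sigma> = \<tau>" using Cn_sig s by simp
    qed
    show "?h ` Perms lam = ?Q'"
    proof
      show "?h ` Perms lam \<subseteq> ?Q'"
      proof
        fix C assume "C \<in> ?h ` Perms lam"
        then obtain \<sigma> where s: "\<sigma> \<in> Perms lam" "C = ?h \<sigma>" by blast
        have "C \<in> ?Q" using hQ s by simp
        moreover obtain \<phi> where \<phi>: "iso_by \<phi> (Cn lam \<sigma>) (?rep C)" using hrep[OF s(1)] s(2) iso_iff by blast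
        have mp: "is_map (Cn lam \<sigma>)" using Cn_IDrep[OF s(1)] IDrep_def by simp
        have "nwhite (Cn lam \<sigma>) = ncc (Cn lam \<sigma>)" using cmap.contr[OF Cn_cmap[OF s(1)]] .
        then have "nwhite (?rep C) = ncc (?rep C)" using iso_nwhite[OF \<phi> mp] iso_ncc[OF \<phi> mp] by simp
        ultimately show "C \<in> ?Q'" by blast
      qed
      show "?Q' \<subseteq> ?h ` Perms lam"
      proof
        fix C assume C: "C \<in> ?Q'"
        let ?M = "?rep C"
        have r: "?M \<in> C" "?M \<in> ?I" "C = Rel lam `` {?M}" using rep C by auto
        have cm: "cmap ?M lam" using IDrep_bmap[OF r(2)] C unfolding cmap_def cmap_axioms_def by auto
        let ?\<sigma> = "cmap.sig ?M lam"
        have sP: "?\<sigma> \<in> Perms lam" using cmap_sig_Perms[OF cm] .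
        have "iso ?M (Cn lam ?\<sigma>)" using cmap_iso_Cn[OF cm] .
        then have "(?M, Cn lam ?\<sigma>) \<in> Rel lam" using r(2) Cn_IDrep[OF sP] by blast
        then have "Rel lam `` {?M} = ?h ?\<sigma>" by (rule equiv_class_eq[OF eqv])
        then have "C = ?h ?\<sigma>" using r(3) by (metis (no_types, lifting))
        then show "C \<in> ?h ` Perms lam" using sP by blast
      qed
    qed
  qed
  have "Fa 0 lam th p = (\<Sum>C\<in>?Q. ?f C)" unfolding Fa_unfold ID_def ..
  also have "\<dots> = (\<Sum>C\<in>?Q'. ?f C)" by (rule s1)
  also have "\<dots> = (\<Sum>\<sigma>\<in>Perms lam. ?f (?h \<sigma>))" by (rule sum.reindex_bij_betw[OF bij, symmetric])
  also have "\<dots> = (\<Sum>\<sigma>\<in>Perms lam. G lam p \<sigma>)" using hval by simp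
  finally show ?thesis .
qed


lemma dec_list_conj:
  fixes lam :: "nat list"
  assumes "sorted_wrt (\<ge>) lam"
  shows "i < length (filter (\<lambda>l. j \<le> l) lam) \<longleftrightarrow> i < length lam \<and> j \<le> lam ! i"
  using assms
proof (induction lam arbitrary: i)
  case Nil then show ?case by simp
next
  case (Cons a rest)
  show ?case
  proof (cases "j \<le> a")
    case True
    then show ?thesis using Cons by (cases i) auto
  next
    case False
    have "\<forall>x\<in>set rest. x \<le> a" using Cons(2) by simp
    then have "\<forall>x\<in>set rest. \<not> j \<le> x" using False by (auto dest: le_trans)
    then have "filter (\<lambda>l. j \<le> l) rest = []" by (simp add: filter_empty_conv)
    moreover have "\<And>k. k < length (a # rest) \<Longrightarrow> (a # rest) ! k \<le> a"
      using Cons(2) by (auto simp: nth_Cons split: nat.splits)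
    ultimately show ?thesis using False by (auto dest: le_trans)
  qed
qed

lemma partition_sorted: "is_partition lam \<Longrightarrow> sorted_wrt (\<ge>) lam"
  unfolding is_partition_def by (simp add: sorted_wrt_rev)

lemma boxes_partition:
  assumes p: "is_partition lam"
  shows "boxes lam = (\<lambda>(j, i). (i, j)) ` Sigma {1..ncols lam} (\<lambda>j. {1..conj_part lam j})"
proof -
  have s: "sorted_wrt (\<ge>) lam" using partition_sorted[OF p] .
  have ci: "\<And>i j. i \<ge> 1 \<Longrightarrow> i \<le> conj_part lam j \<longleftrightarrow> i \<le> length lam \<and> j \<le> lam ! (i - 1)"
  proof -
    fix i j :: nat assume i: "i \<ge> 1"
    have "i \<le> conj_part lam j \<longleftrightarrow> i - 1 < conj_part lam j" using i by linarith
    also have "\<dots> \<longleftrightarrow> i - 1 < length lam \<and> j \<le> lam ! (i - 1)" unfolding conj_part_def by (rule dec_list_conj[OF s])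
    also have "\<dots> \<longleftrightarrow> i \<le> length lam \<and> j \<le> lam ! (i - 1)" using i by linarith
    finally show "i \<le> conj_part lam j \<longleftrightarrow> i \<le> length lam \<and> j \<le> lam ! (i - 1)" .
  qed
  have hd: "\<And>i. i < length lam \<Longrightarrow> lam ! i \<le> ncols lam"
    using s unfolding ncols_def by (cases lam) (auto simp: nth_Cons split: nat.splits)
  show ?thesis
  proof (intro set_eqI iffI)
    fix b assume "b \<in> boxes lam"
    then obtain i j where b: "b = (i, j)" "1 \<le> i" "i \<le> length lam" "1 \<le> j" "j \<le> lam ! (i - 1)"
      unfolding boxes_def by auto
    have "i - 1 < length lam" using b by linarith
    then have "j \<le> ncols lam" using hd[of "i - 1"] b by simp
    moreover have "i \<le> conj_part lam j" using ci b by simp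
    ultimately show "b \<in> (\<lambda>(j, i). (i, j)) ` Sigma {1..ncols lam} (\<lambda>j. {1..conj_part lam j})"
      using b by (auto intro: image_eqI[of _ _ "(j, i)"])
  next
    fix b assume "b \<in> (\<lambda>(j, i). (i, j)) ` Sigma {1..ncols lam} (\<lambda>j. {1..conj_part lam j})"
    then obtain i j where b: "b = (i, j)" "1 \<le> j" "1 \<le> i" "i \<le> conj_part lam j" by auto
    then show "b \<in> boxes lam" unfolding boxes_def using ci by auto
  qed
qed

lemma boxes_rep: "boxes (replicate m 1) = (\<lambda>i. (i, 1)) ` {1..m}"
  unfolding boxes_def by auto


definition hh :: "(nat \<Rightarrow> int) \<Rightarrow> (nat \<times> nat \<Rightarrow> nat \<times> nat) \<Rightarrow> nat \<times> nat \<Rightarrow> int" where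
  "hh p \<sigma> b = (if b = Min (orbit \<sigma> b) then p (card (orbit \<sigma> b)) else -1)"

lemma G_prod:
  assumes s: "\<sigma> \<in> Perms lam"
  shows "G lam p \<sigma> = (\<Prod>b\<in>boxes lam. hh p \<sigma> b)"
proof -
  interpret canon "boxes lam" "bidx lam" \<sigma> by (rule canon_lam[OF s])
  have RB: "R \<subseteq> boxes lam" using R_sub .
  have fR: "finite R" using finB RB finite_subset by blast
  have "(\<Prod>b\<in>boxes lam. hh p \<sigma> b) = (\<Prod>b\<in>boxes lam - R. hh p \<sigma> b) * (\<Prod>b\<in>R. hh p \<sigma> b)"
    by (rule prod.subset_diff[OF RB finB])
  also have "(\<Prod>b\<in>boxes lam - R. hh p \<sigma> b) = (\<Prod>b\<in>boxes lam - R. -1)"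
    by (rule prod.cong) (auto simp: hh_def R_def mn_def)
  also have "\<dots> = (-1) ^ (card (boxes lam) - card R)" using card_Diff_subset[OF fR RB] by simp
  also have "(\<Prod>b\<in>R. hh p \<sigma> b) = (\<Prod>b\<in>R. p (card (orbit \<sigma> b)))"
    by (rule prod.cong) (auto simp: hh_def R_def mn_def)
  finally show ?thesis unfolding G_def by simp
qed

definition colb :: "nat \<Rightarrow> (nat \<times> nat) set" where "colb m = (\<lambda>i. (i, 1)) ` {1..m}"

lemma colb_boxes: "boxes (replicate m 1) = colb m" unfolding colb_def using boxes_rep .

lemma Perms_rep: "Perms (replicate m 1) = {\<tau>. \<tau> permutes colb m}"
  unfolding Perms_def colb_boxes
proof (intro Collect_cong iffI conjI)
  fix \<tau> assume "\<tau> permutes colb m"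
  show "\<forall>b\<in>colb m. snd (\<tau> b) = snd b"
  proof
    fix b assume b: "b \<in> colb m"
    then have "\<tau> b \<in> colb m" using permutes_in_image[OF \<open>\<tau> permutes colb m\<close>] by simp
    then show "snd (\<tau> b) = snd b" using b by (auto simp: colb_def)
  qed
qed auto

definition ej :: "nat \<Rightarrow> nat \<times> nat \<Rightarrow> nat \<times> nat" where "ej j x = (fst x, j)"

definition glue :: "nat list \<Rightarrow> (nat \<Rightarrow> nat \<times> nat \<Rightarrow> nat \<times> nat) \<Rightarrow> nat \<times> nat \<Rightarrow> nat \<times> nat" where
  "glue lam g b = (if b \<in> boxes lam then (fst (g (snd b) (fst b, 1)), snd b) else b)"

definition restr :: "nat list \<Rightarrow> (nat \<times> nat \<Rightarrow> nat \<times> nat) \<Rightarrow> nat \<Rightarrow> nat \<times> nat \<Rightarrow> nat \<times> nat" where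
  "restr lam \<sigma> j x = (if x \<in> colb (conj_part lam j) then (fst (\<sigma> (fst x, j)), 1) else x)"

abbreviation JJ :: "nat list \<Rightarrow> nat set" where "JJ lam \<equiv> {1..ncols lam}"
abbreviation PP :: "nat list \<Rightarrow> nat \<Rightarrow> (nat \<times> nat \<Rightarrow> nat \<times> nat) set" where
  "PP lam j \<equiv> Perms (replicate (conj_part lam j) 1)"

lemma box_iff:
  assumes p: "is_partition lam"
  shows "(i, j) \<in> boxes lam \<longleftrightarrow> j \<in> JJ lam \<and> (i, 1) \<in> colb (conj_part lam j)"
  unfolding boxes_partition[OF p] colb_def by auto

lemma box_iff2:
  assumes p: "is_partition lam" and j: "j \<in> JJ lam" and x: "x \<in> colb (conj_part lam j)"
  shows "(fst x, j) \<in> boxes lam"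
proof -
  have "(fst x, 1) \<in> colb (conj_part lam j)" using x by (auto simp: colb_def)
  then show ?thesis using box_iff[OF p] j by simp
qed

lemma colb_snd: "x \<in> colb m \<Longrightarrow> snd x = 1" unfolding colb_def by auto
lemma colb_fst: "x \<in> colb m \<Longrightarrow> (fst x, 1) = x" unfolding colb_def by auto
lemma finite_colb: "finite (colb m)" unfolding colb_def by simp

lemma glue_ej:
  assumes p: "is_partition lam" and j: "j \<in> JJ lam" and x: "x \<in> colb (conj_part lam j)"
    and g: "g j permutes colb (conj_part lam j)"
  shows "glue lam g (ej j x) = ej j (g j x)" "ej j x \<in> boxes lam"
proof -
  have xb: "ej j x \<in> boxes lam" unfolding ej_def using box_iff2[OF p j x] .
  show "ej j x \<in> boxes lam" by (rule xb)
  have "(fst x, 1) = x" using colb_fst[OF x] .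
  then show "glue lam g (ej j x) = ej j (g j x)" unfolding glue_def ej_def using xb by (simp add: ej_def)
qed

lemma glue_Perms:
  assumes p: "is_partition lam" and g: "g \<in> PiE (JJ lam) (PP lam)"
  shows "glue lam g \<in> Perms lam"
proof -
  have gp: "\<And>j. j \<in> JJ lam \<Longrightarrow> g j permutes colb (conj_part lam j)"
    using g Perms_rep by (auto simp: PiE_iff)
  have into: "\<And>b. b \<in> boxes lam \<Longrightarrow> glue lam g b \<in> boxes lam \<and> snd (glue lam g b) = snd b"
  proof -
    fix b assume b: "b \<in> boxes lam"
    obtain i j where ij: "b = (i, j)" by fastforce
    have j: "j \<in> JJ lam" and x: "(i, 1) \<in> colb (conj_part lam j)" using box_iff[OF p] b ij by auto
    have y: "g j (i, 1) \<in> colb (conj_part lam j)" using permutes_in_image[OF gp[OF j]] x by simp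
    have "(fst (g j (i, 1)), j) \<in> boxes lam" using box_iff2[OF p j y] .
    then show "glue lam g b \<in> boxes lam \<and> snd (glue lam g b) = snd b" unfolding glue_def using b ij by simp
  qed
  have inj: "inj_on (glue lam g) (boxes lam)"
  proof (rule inj_onI)
    fix b c assume b: "b \<in> boxes lam" and c: "c \<in> boxes lam" and e: "glue lam g b = glue lam g c"
    obtain i j where ij: "b = (i, j)" by fastforce
    obtain i' j' where ij': "c = (i', j')" by fastforce
    have jj: "j = j'" using e into b c ij ij' by (metis snd_conv)
    have j: "j \<in> JJ lam" and x: "(i, 1) \<in> colb (conj_part lam j)" using box_iff[OF p] b ij by auto
    have x': "(i', 1) \<in> colb (conj_part lam j)" using box_iff[OF p] c ij' jj by auto
    have y: "g j (i, 1) \<in> colb (conj_part lam j)" "g j (i', 1) \<in> colb (conj_part lam j)"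
      using permutes_in_image[OF gp[OF j]] x x' by simp_all
    have "fst (g j (i, 1)) = fst (g j (i', 1))" using e b c ij ij' jj unfolding glue_def by simp
    then have "g j (i, 1) = g j (i', 1)" using colb_fst y by metis
    then have "(i, 1) = (i', 1)" using permutes_inj[OF gp[OF j]] unfolding inj_def by blast
    then show "b = c" using ij ij' jj by simp
  qed
  have "glue lam g ` boxes lam = boxes lam" using endo_inj_surj[OF finite_boxes _ inj] into by blast
  then have "glue lam g permutes boxes lam"
    using inj by (intro bij_imp_permutes) (auto simp: bij_betw_def glue_def)
  then show ?thesis unfolding Perms_def using into by blast
qed

lemma restr_PP:
  assumes p: "is_partition lam" and s: "\<sigma> \<in> Perms lam" and j: "j \<in> JJ lam"
  shows "restr lam \<sigma> j \<in> PP lam j"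
proof -
  have sp: "\<sigma> permutes boxes lam" and sc: "\<forall>b\<in>boxes lam. snd (\<sigma> b) = snd b" using s Perms_def by auto
  let ?m = "conj_part lam j"
  have into: "\<And>x. x \<in> colb ?m \<Longrightarrow> restr lam \<sigma> j x \<in> colb ?m"
  proof -
    fix x assume x: "x \<in> colb ?m"
    have b: "(fst x, j) \<in> boxes lam" using box_iff2[OF p j x] .
    have sb: "\<sigma> (fst x, j) \<in> boxes lam" "snd (\<sigma> (fst x, j)) = j" using permutes_in_image[OF sp] b sc by auto
    have "(fst (\<sigma> (fst x, j)), j) \<in> boxes lam" using sb by (metis prod.collapse)
    then show "restr lam \<sigma> j x \<in> colb ?m" unfolding restr_def using x box_iff[OF p] by simp
  qed
  have inj: "inj_on (restr lam \<sigma> j) (colb ?m)"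
  proof (rule inj_onI)
    fix x y assume x: "x \<in> colb ?m" and y: "y \<in> colb ?m" and e: "restr lam \<sigma> j x = restr lam \<sigma> j y"
    have b: "(fst x, j) \<in> boxes lam" "(fst y, j) \<in> boxes lam" using box_iff2[OF p j x] box_iff2[OF p j y] by auto
    have "fst (\<sigma> (fst x, j)) = fst (\<sigma> (fst y, j))" using e x y unfolding restr_def by simp
    moreover have "snd (\<sigma> (fst x, j)) = snd (\<sigma> (fst y, j))" using sc b by simp
    ultimately have "\<sigma> (fst x, j) = \<sigma> (fst y, j)" by (simp add: prod_eq_iff)
    then have "(fst x, j) = (fst y, j)" using sp permutes_inj by (metis injD)
    then show "x = y" using colb_fst x y by (metis fst_conv)
  qed
  have "restr lam \<sigma> j ` colb ?m = colb ?m" using endo_inj_surj[OF finite_colb _ inj] into by blast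
  then have "restr lam \<sigma> j permutes colb ?m"
    using inj by (intro bij_imp_permutes) (auto simp: bij_betw_def restr_def)
  then show ?thesis using Perms_rep by simp
qed

lemma glue_restr:
  assumes p: "is_partition lam" and s: "\<sigma> \<in> Perms lam"
  shows "glue lam (\<lambda>j\<in>JJ lam. restr lam \<sigma> j) = \<sigma>"
proof
  fix b
  have sp: "\<sigma> permutes boxes lam" and sc: "\<forall>b\<in>boxes lam. snd (\<sigma> b) = snd b" using s Perms_def by auto
  show "glue lam (\<lambda>j\<in>JJ lam. restr lam \<sigma> j) b = \<sigma> b"
  proof (cases "b \<in> boxes lam")
    case True
    obtain i j where ij: "b = (i, j)" by fastforce
    have j: "j \<in> JJ lam" and x: "(i, 1) \<in> colb (conj_part lam j)" using box_iff[OF p] True ij by auto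
    have sj: "snd (\<sigma> (i, j)) = j" using sc True ij by simp
    have bi: "(i, j) \<in> boxes lam" using True ij by simp
    show ?thesis unfolding ij glue_def restr_def using bi j x sj by (simp add: prod_eq_iff)
  next
    case False
    then show ?thesis unfolding glue_def using sp permutes_not_in by metis
  qed
qed

lemma restr_glue:
  assumes p: "is_partition lam" and g: "g \<in> PiE (JJ lam) (PP lam)"
  shows "(\<lambda>j\<in>JJ lam. restr lam (glue lam g) j) = g"
proof
  fix j
  show "(\<lambda>j\<in>JJ lam. restr lam (glue lam g) j) j = g j"
  proof (cases "j \<in> JJ lam")
    case False
    then show ?thesis using PiE_arb[OF g False] False by auto
  next
    case j: True
    have gp: "g j permutes colb (conj_part lam j)" using g Perms_rep j by (auto simp: PiE_iff)
    show ?thesis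
    proof
      fix x
      show "(\<lambda>j\<in>JJ lam. restr lam (glue lam g) j) j x = g j x"
      proof (cases "x \<in> colb (conj_part lam j)")
        case True
        have "glue lam g (ej j x) = ej j (g j x)" using glue_ej(1)[where g=g, OF p j True gp] by simp
        moreover have "g j x \<in> colb (conj_part lam j)" using permutes_in_image[OF gp] True by simp
        ultimately show ?thesis unfolding restr_def using j True colb_fst by (simp add: ej_def)
      next
        case False
        then show ?thesis unfolding restr_def using j gp permutes_not_in by fastforce
      qed
    qed
  qed
qed

lemma glue_bij:
  assumes p: "is_partition lam"
  shows "bij_betw (glue lam) (PiE (JJ lam) (PP lam)) (Perms lam)"
proof (rule bij_betw_byWitness[where f'="\<lambda>\<sigma>. \<lambda>j\<in>JJ lam. restr lam \<sigma> j"])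
  show "\<forall>g\<in>PiE (JJ lam) (PP lam). (\<lambda>j\<in>JJ lam. restr lam (glue lam g) j) = g" using restr_glue[OF p] by blast
  show "\<forall>\<sigma>\<in>Perms lam. glue lam (\<lambda>j\<in>JJ lam. restr lam \<sigma> j) = \<sigma>" using glue_restr[OF p] by blast
  show "glue lam ` PiE (JJ lam) (PP lam) \<subseteq> Perms lam" using glue_Perms[OF p] by blast
  show "(\<lambda>\<sigma>. \<lambda>j\<in>JJ lam. restr lam \<sigma> j) ` Perms lam \<subseteq> PiE (JJ lam) (PP lam)"
    using restr_PP[OF p] by (auto simp: PiE_iff)
qed


lemma ej_mono: "mono (ej j)"
  unfolding mono_def ej_def by (auto simp: less_eq_prod_def)

lemma glue_pow:
  assumes p: "is_partition lam" and g: "g \<in> PiE (JJ lam) (PP lam)" and j: "j \<in> JJ lam"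
    and x: "x \<in> colb (conj_part lam j)"
  shows "(glue lam g ^^ k) (ej j x) = ej j ((g j ^^ k) x) \<and> (g j ^^ k) x \<in> colb (conj_part lam j)"
proof (induction k)
  case 0 then show ?case using x by simp
next
  case (Suc k)
  have gp: "g j permutes colb (conj_part lam j)" using g Perms_rep j by (auto simp: PiE_iff)
  have "glue lam g (ej j ((g j ^^ k) x)) = ej j (g j ((g j ^^ k) x))"
    using glue_ej(1)[where g=g, OF p j _ gp] Suc by blast
  moreover have "g j ((g j ^^ k) x) \<in> colb (conj_part lam j)" using permutes_in_image[OF gp] Suc by simp
  ultimately show ?case using Suc by simp
qed

lemma orbit_glue:
  assumes p: "is_partition lam" and g: "g \<in> PiE (JJ lam) (PP lam)" and j: "j \<in> JJ lam"
    and x: "x \<in> colb (conj_part lam j)"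
  shows "orbit (glue lam g) (ej j x) = ej j ` orbit (g j) x"
proof -
  have gp: "g j permutes colb (conj_part lam j)" using g Perms_rep j by (auto simp: PiE_iff)
  have p1: "permutation (g j)" using gp finite_colb permutation_permutes by blast
  have p2: "permutation (glue lam g)" using glue_Perms[OF p g] finite_boxes permutation_permutes
    unfolding Perms_def by blast
  show ?thesis unfolding orbit_altdef_permutation[OF p1] orbit_altdef_permutation[OF p2]
    using glue_pow[OF p g j x] by auto
qed

lemma hh_glue:
  assumes p: "is_partition lam" and g: "g \<in> PiE (JJ lam) (PP lam)" and j: "j \<in> JJ lam"
    and x: "x \<in> colb (conj_part lam j)"
  shows "hh q (glue lam g) (ej j x) = hh q (g j) x"
proof -
  have gp: "g j permutes colb (conj_part lam j)" using g Perms_rep j by (auto simp: PiE_iff)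
  let ?O = "orbit (g j) x"
  have Osub: "?O \<subseteq> colb (conj_part lam j)" using permutes_orbit_subset[OF gp x] .
  have fO: "finite ?O" using Osub finite_colb finite_subset by blast
  have p1: "permutation (g j)" using gp finite_colb permutation_permutes by blast
  have xO: "x \<in> ?O" using permutation_self_in_orbit[OF p1] .
  have inj: "inj_on (ej j) (colb (conj_part lam j))"
    unfolding ej_def by (rule inj_onI) (metis colb_fst fst_conv)
  have injO: "inj_on (ej j) ?O" using inj_on_subset[OF inj Osub] .
  have card: "card (ej j ` ?O) = card ?O" using card_image[OF injO] .
  have ne: "?O \<noteq> {}" using xO by blast
  have mn: "Min (ej j ` ?O) = ej j (Min ?O)" using mono_Min_commute[OF ej_mono fO ne] by simp
  have mO: "Min ?O \<in> ?O" using Min_in[OF fO] xO by auto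
  have xc: "x \<in> colb (conj_part lam j)" using x .
  have mc: "Min ?O \<in> colb (conj_part lam j)" using mO Osub by blast
  have eq: "ej j x = ej j (Min ?O) \<longleftrightarrow> x = Min ?O" using inj_on_eq_iff[OF inj xc mc] .
  show ?thesis unfolding hh_def orbit_glue[OF p g j x] card mn eq ..
qed

lemma G_lam_split:
  assumes p: "is_partition lam" and s: "\<sigma> \<in> Perms lam"
  shows "G lam q \<sigma> = (\<Prod>j\<in>JJ lam. \<Prod>i\<in>{1..conj_part lam j}. hh q \<sigma> (i, j))"
proof -
  have inj: "inj_on (\<lambda>(j, i). (i, j)) (Sigma (JJ lam) (\<lambda>j. {1..conj_part lam j}))"
    by (rule inj_onI) auto
  have "G lam q \<sigma> = (\<Prod>b\<in>boxes lam. hh q \<sigma> b)" using G_prod[OF s] .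
  also have "\<dots> = (\<Prod>(j, i)\<in>Sigma (JJ lam) (\<lambda>j. {1..conj_part lam j}). hh q \<sigma> (i, j))"
    unfolding boxes_partition[OF p] prod.reindex[OF inj] by (simp add: case_prod_beta o_def)
  also have "\<dots> = (\<Prod>j\<in>JJ lam. \<Prod>i\<in>{1..conj_part lam j}. hh q \<sigma> (i, j))"
    by (rule prod.Sigma[symmetric]) auto
  finally show ?thesis .
qed

lemma G_rep_split:
  assumes s: "\<tau> \<in> Perms (replicate m 1)"
  shows "G (replicate m 1) q \<tau> = (\<Prod>i\<in>{1..m}. hh q \<tau> (i, 1))"
proof -
  have inj: "inj_on (\<lambda>i. (i, 1::nat)) {1..m}" by (rule inj_onI) auto
  show ?thesis using G_prod[OF s] unfolding boxes_rep prod.reindex[OF inj] by (simp add: o_def)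
qed

lemma G_glue:
  assumes p: "is_partition lam" and g: "g \<in> PiE (JJ lam) (PP lam)"
  shows "G lam q (glue lam g) = (\<Prod>j\<in>JJ lam. G (replicate (conj_part lam j) 1) q (g j))"
proof -
  have "G lam q (glue lam g) = (\<Prod>j\<in>JJ lam. \<Prod>i\<in>{1..conj_part lam j}. hh q (glue lam g) (i, j))"
    using G_lam_split[OF p glue_Perms[OF p g]] .
  also have "\<dots> = (\<Prod>j\<in>JJ lam. \<Prod>i\<in>{1..conj_part lam j}. hh q (g j) (i, 1))"
  proof (rule prod.cong[OF refl], rule prod.cong[OF refl])
    fix j i assume j: "j \<in> JJ lam" and i: "i \<in> {1..conj_part lam j}"
    have x: "(i, 1) \<in> colb (conj_part lam j)" using i unfolding colb_def by auto
    show "hh q (glue lam g) (i, j) = hh q (g j) (i, 1)" using hh_glue[OF p g j x] by (simp add: ej_def)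
  qed
  also have "\<dots> = (\<Prod>j\<in>JJ lam. G (replicate (conj_part lam j) 1) q (g j))"
    using G_rep_split g by (auto simp: PiE_iff intro!: prod.cong)
  finally show ?thesis .
qed

lemma finite_PP: "finite (Perms (replicate m 1))"
  unfolding Perms_rep using finite_permutations[OF finite_colb] .

lemma comb_identity:
  assumes p: "is_partition lam"
  shows "(\<Sum>\<sigma>\<in>Perms lam. G lam q \<sigma>) =
    (\<Prod>j\<in>JJ lam. \<Sum>\<tau>\<in>PP lam j. G (replicate (conj_part lam j) 1) q \<tau>)"
proof -
  have "(\<Sum>\<sigma>\<in>Perms lam. G lam q \<sigma>) = (\<Sum>g\<in>PiE (JJ lam) (PP lam). G lam q (glue lam g))"
    by (rule sum.reindex_bij_betw[OF glue_bij[OF p], symmetric])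
  also have "\<dots> = (\<Sum>g\<in>PiE (JJ lam) (PP lam). \<Prod>j\<in>JJ lam. G (replicate (conj_part lam j) 1) q (g j))"
    using G_glue[OF p] by simp
  also have "\<dots> = (\<Prod>j\<in>JJ lam. \<Sum>\<tau>\<in>PP lam j. G (replicate (conj_part lam j) 1) q \<tau>)"
  proof (rule prod_sum_PiE[symmetric])
    show "finite (JJ lam)" by simp
    show "\<And>j. j \<in> JJ lam \<Longrightarrow> finite (PP lam j)" by (rule finite_PP)
  qed
  finally show ?thesis .
qed

theorem mainTheorem9:
  fixes lam :: "nat list" and th :: "dmap \<Rightarrow> nat" and p :: "nat \<Rightarrow> int"
  assumes "is_partition lam"
    and "nonorient_stat th"
  shows "Fa 0 lam th p = (\<Prod>i = 1..ncols lam. Fa 0 (replicate (conj_part lam i) 1) th p)"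
  using main_formula[OF assms(2)] comb_identity[OF assms(1)] by simp


end
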